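(* Let $\mathcal K$ be a 2-category which admits Eilenberg–Moore constructions for monads and in which idempotent 2-cells split, with $J^w$ as in the context. Let $(V,\psi),(W,\phi):(t,\mu,\eta)\to(t',\mu',\eta')$ be 1-cells of $\mathrm{EM}^w(\mathcal K)$ and $\omega:V\Rightarrow W$ a 2-cell of $\mathcal K$; let $(\iota,\pi)$ denote the chosen splittings used to construct $J^w(V,\psi)$ and $J^w(W,\phi)$, so that $(J^w(V,\psi),\iota,\pi)$ and $(J^w(W,\phi),\iota,\pi)$ are weak liftings of $V$ and $W$ for $t,t'$. (1) The following are equivalent: (i) $\omega t\ast\psi=W\mu\ast\phi t\ast t'\omega t\ast t'\psi\ast t'\eta'V$; (ii) $\omega t\ast\psi\ast\eta'V$ is a 2-cell $(V,\psi)\Rightarrow(W,\phi)$ in $\mathrm{EM}^w(\mathcal K)$; (iii) $\pi\ast\omega v\ast\iota$ is a morphism of $t'$-algebras $(v'J^w(V,\psi),v'\epsilon'J^w(V,\psi))\to(v'J^w(W,\phi),v'\epsilon'J^w(W,\phi))$ (i.e. a 2-cell between these 1-cells $IJ(t)\to t'$ of $\mathrm{EM}(\mathcal K)$) and $\iota\ast\pi\ast\omega v\ast\iota=\omega v\ast\iota$; (iv) $\omega$ has a weak $\iota$-lifting $J^w(V,\psi)\Rightarrow J^w(W,\phi)$. If these hold, then $v'J^w(\omega t\ast\psi\ast\eta'V)=\pi\ast\omega v\ast\iota$, i.e. the weak $\iota$-lifting of $\omega$ is $J^w(\omega t\ast\psi\ast\eta'V)$. (2) The following are equivalent: (i) $\phi\ast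 t'\omega=W\mu\ast\phi t\ast\eta'Wt\ast\omega t\ast\psi$; (ii) $\phi\ast\eta'W\ast\omega$ is a 2-cell $(V,\psi)\Rightarrow(W,\phi)$ in $\mathrm{EM}^w(\mathcal K)$; (iii) $\pi\ast\omega v\ast\iota$ is a morphism of $t'$-algebras as in (1)(iii) and $\pi\ast\omega v\ast\iota\ast\pi=\pi\ast\omega v$; (iv) $\omega$ has a weak $\pi$-lifting $J^w(V,\psi)\Rightarrow J^w(W,\phi)$. If these hold, then $v'J^w(\phi\ast\eta'W\ast\omega)=\pi\ast\omega v\ast\iota$, i.e. the weak $\pi$-lifting of $\omega$ is $J^w(\phi\ast\eta'W\ast\omega)$. (3) The following are equivalent: (i) $\phi\ast t'\omega=\omega t\ast\psi$; (ii) $\phi\ast\eta'W\ast\omega$ and $\omega t\ast\psi\ast\eta'V$ are both 2-cells $(V,\psi)\Rightarrow(W,\phi)$ in $\mathrm{EM}^w(\mathcal K)$ (and then they are equal); (iii) $\pi\ast\omega v\ast\iota$ is a morphism of $t'$-algebras as in (1)(iii) and $\iota\ast\pi\ast\omega v=\omega v\ast\iota\ast\pi$; (iv) $\omega$ has both a weak $\iota$-lifting and a weak $\pi$-lifting $J^w(V,\psi)\Rightarrow J^w(W,\phi)$ (and then they are equal).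
   Context: Conventions in a 2-category $\mathcal K$: horizontal composition and whiskering by juxtaposition in the order of functor composition; identity 1-cell of $k$ written $k$, identity 2-cell of $V$ written $V$; vertical composition $\ast$ with $\alpha\ast\beta$ meaning $\beta$ then $\alpha$. Monads $(t,\mu,\eta)$ on $k$ are associative and unital. $\mathrm{EM}^w(\mathcal K)$: 1-cells $(V,\psi):(t,\mu,\eta)\to(t',\mu',\eta')$ with $V:k\to k'$, $\psi:t'V\Rightarrow Vt$, $V\mu\ast\psi t\ast t'\psi=\psi\ast\mu'V$; 2-cells $(V,\psi)\Rightarrow(W,\phi)$ are $\varrho:V\Rightarrow Wt$ with $W\mu\ast\varrho t\ast\psi=W\mu\ast\phi t\ast t'\varrho$ and $\varrho=W\mu\ast\phi t\ast\eta'Wt\ast\varrho$; vertical composite $\tau\bullet\varrho=U\mu\ast\tau t\ast\varrho$, identity 2-cell on $(W,\phi)$ is $\phi\ast\eta'W$ (these form a 2-category, with the Lack–Street $\mathrm{EM}(\mathcal K)$ as sub-2-category of 1-cells with $\psi\ast\eta'V=V\eta$). $\mathcal K$ admits Eilenberg–Moore constructions for monads: the inclusion $I:\mathcal K\to\mathrm{EM}(\mathcal K)$ has a right 2-adjoint $J$; each monad $(t,\mu,\eta)$ gives an adjunction $f\dashv v$, $f:k\to J(t)$, $v:J(t)\to k$, unit $\eta$, counit $\epsilon:fv\Rightarrow J(t)$, $t=vf$, $\mu=v\epsilon f$ (for $t'$: $f',v',\eta',\epsilon'$); $X\mapsto(vX,v\epsilon X)$, $\omega\mapsto v\omega$ is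 an isomorphism from $\mathcal K(l,J(t))$ to the category of $t$-algebras $(A:l\to k,\alpha:tA\Rightarrow A)$ with morphisms $\rho$ satisfying $\beta\ast t\rho=\rho\ast\alpha$. Idempotent 2-cells split. $J^w$: for each 1-cell $(V,\psi)$ of $\mathrm{EM}^w(\mathcal K)$ a splitting $Vv\overset{\pi}{\Rightarrow}\widetilde V\overset{\iota}{\Rightarrow}Vv$ of the idempotent $Vv\epsilon\ast\psi v\ast\eta'Vv$ is fixed; $J^w(t)=J(t)$; $J^w(V,\psi):J(t)\to J(t')$ is the unique 1-cell with $v'J^w(V,\psi)=\widetilde V$ and $v'\epsilon'J^w(V,\psi)=\pi\ast Vv\epsilon\ast\psi v\ast t'\iota$; for a 2-cell $\varrho:(V,\psi)\Rightarrow(W,\phi)$, $J^w(\varrho)$ is the unique 2-cell with $v'J^w(\varrho)=\pi\ast Wv\epsilon\ast\varrho v\ast\iota$. Weak liftings: a weak lifting of a 1-cell $V:k\to k'$ for monads $t$ (on $k$) and $t'$ (on $k'$) is a 1-cell $\overline V:J(t)\to J(t')$ together with a 2-cell $\iota:v'\overline V\Rightarrow Vv$ and a retraction $\pi:Vv\Rightarrow v'\overline V$ ($\pi\ast\iota$ identity). Given weak liftings $(\overline V,\iota,\pi)$ of $V$ and $(\overline W,\iota,\pi)$ of $W$, a weak $\iota$-lifting of $\omega:V\Rightarrow W$ is a 2-cell $\omega^\iota:\overline V\Rightarrow\overline W$ with $\iota\ast v'\omega^\iota=\omega v\ast\iota$; a weak $\pi$-lifting is $\omega^\pi:\overline V\Rightarrow\overline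 W$ with $v'\omega^\pi\ast\pi=\pi\ast\omega v$. *)

theory Defs
  imports Main
begin

text \<open>A (strict) 2-category, represented by types of 0-cells ('o), 1-cells ('a) and
2-cells ('c) with total operations that are only meaningful on composable arguments.
Juxtaposition of the paper (horizontal composition in the order of functor composition)
is hc; vertical composition (alpha * beta = beta then alpha) is vc.\<close>

record ('o,'a,'c) twocat =
  dom1 :: "'a \<Rightarrow> 'o"
  cod1 :: "'a \<Rightarrow> 'o"
  id1 :: "'o \<Rightarrow> 'a"
  cp1 :: "'a \<Rightarrow> 'a \<Rightarrow> 'a"
  dom2 :: "'c \<Rightarrow> 'a"
  cod2 :: "'c \<Rightarrow> 'a"
  id2 :: "'a \<Rightarrow> 'c"
  vc :: "'c \<Rightarrow> 'c \<Rightarrow> 'c"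
  hc :: "'c \<Rightarrow> 'c \<Rightarrow> 'c"

definition two_category :: "('o,'a,'c) twocat \<Rightarrow> bool" where
  "two_category C \<longleftrightarrow>
    (\<forall>k. dom1 C (id1 C k) = k \<and> cod1 C (id1 C k) = k) \<and>
    (\<forall>g f. dom1 C g = cod1 C f \<longrightarrow>
        dom1 C (cp1 C g f) = dom1 C f \<and> cod1 C (cp1 C g f) = cod1 C g) \<and>
    (\<forall>f. cp1 C f (id1 C (dom1 C f)) = f \<and> cp1 C (id1 C (cod1 C f)) f = f) \<and>
    (\<forall>h g f. dom1 C h = cod1 C g \<longrightarrow> dom1 C g = cod1 C f \<longrightarrow>
        cp1 C (cp1 C h g) f = cp1 C h (cp1 C g f)) \<and>
    (\<forall>\<alpha>. dom1 C (dom2 C \<alpha>) = dom1 C (cod2 C \<alpha>) \<and> cod1 C (dom2 C \<alpha>) = cod1 C (cod2 C \<alpha>)) \<and>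
    (\<forall>f. dom2 C (id2 C f) = f \<and> cod2 C (id2 C f) = f) \<and>
    (\<forall>\<beta> \<alpha>. dom2 C \<beta> = cod2 C \<alpha> \<longrightarrow>
        dom2 C (vc C \<beta> \<alpha>) = dom2 C \<alpha> \<and> cod2 C (vc C \<beta> \<alpha>) = cod2 C \<beta>) \<and>
    (\<forall>\<alpha>. vc C \<alpha> (id2 C (dom2 C \<alpha>)) = \<alpha> \<and> vc C (id2 C (cod2 C \<alpha>)) \<alpha> = \<alpha>) \<and>
    (\<forall>\<gamma> \<beta> \<alpha>. dom2 C \<gamma> = cod2 C \<beta> \<longrightarrow> dom2 C \<beta> = cod2 C \<alpha> \<longrightarrow>
        vc C (vc C \<gamma> \<beta>) \<alpha> = vc C \<gamma> (vc C \<beta> \<alpha>)) \<and>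
    (\<forall>\<beta> \<alpha>. dom1 C (dom2 C \<beta>) = cod1 C (dom2 C \<alpha>) \<longrightarrow>
        dom2 C (hc C \<beta> \<alpha>) = cp1 C (dom2 C \<beta>) (dom2 C \<alpha>) \<and>
        cod2 C (hc C \<beta> \<alpha>) = cp1 C (cod2 C \<beta>) (cod2 C \<alpha>)) \<and>
    (\<forall>\<alpha>. hc C \<alpha> (id2 C (id1 C (dom1 C (dom2 C \<alpha>)))) = \<alpha> \<and>
         hc C (id2 C (id1 C (cod1 C (dom2 C \<alpha>)))) \<alpha> = \<alpha>) \<and>
    (\<forall>\<gamma> \<beta> \<alpha>. dom1 C (dom2 C \<gamma>) = cod1 C (dom2 C \<beta>) \<longrightarrow>
        dom1 C (dom2 C \<beta>) = cod1 C (dom2 C \<alpha>) \<longrightarrow>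
        hc C (hc C \<gamma> \<beta>) \<alpha> = hc C \<gamma> (hc C \<beta> \<alpha>)) \<and>
    (\<forall>g f. dom1 C g = cod1 C f \<longrightarrow> hc C (id2 C g) (id2 C f) = id2 C (cp1 C g f)) \<and>
    (\<forall>\<beta>' \<beta> \<alpha>' \<alpha>. dom2 C \<beta>' = cod2 C \<beta> \<longrightarrow> dom2 C \<alpha>' = cod2 C \<alpha> \<longrightarrow>
        dom1 C (dom2 C \<beta>) = cod1 C (dom2 C \<alpha>) \<longrightarrow>
        hc C (vc C \<beta>' \<beta>) (vc C \<alpha>' \<alpha>) = vc C (hc C \<beta>' \<alpha>') (hc C \<beta> \<alpha>))"

definition hom1 :: "('o,'a,'c) twocat \<Rightarrow> 'a \<Rightarrow> 'o \<Rightarrow> 'o \<Rightarrow> bool" where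
  "hom1 C f k l \<longleftrightarrow> dom1 C f = k \<and> cod1 C f = l"

definition hom2 :: "('o,'a,'c) twocat \<Rightarrow> 'c \<Rightarrow> 'a \<Rightarrow> 'a \<Rightarrow> bool" where
  "hom2 C \<alpha> f g \<longleftrightarrow> dom2 C \<alpha> = f \<and> cod2 C \<alpha> = g"

definition lw :: "('o,'a,'c) twocat \<Rightarrow> 'a \<Rightarrow> 'c \<Rightarrow> 'c" where
  "lw C f \<alpha> = hc C (id2 C f) \<alpha>"

definition rw :: "('o,'a,'c) twocat \<Rightarrow> 'c \<Rightarrow> 'a \<Rightarrow> 'c" where
  "rw C \<alpha> f = hc C \<alpha> (id2 C f)"

definition is_monad :: "('o,'a,'c) twocat \<Rightarrow> 'o \<Rightarrow> 'a \<Rightarrow> 'c \<Rightarrow> 'c \<Rightarrow> bool" where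
  "is_monad C k t \<mu> \<eta> \<longleftrightarrow>
     hom1 C t k k \<and> hom2 C \<mu> (cp1 C t t) t \<and> hom2 C \<eta> (id1 C k) t \<and>
     vc C \<mu> (rw C \<mu> t) = vc C \<mu> (lw C t \<mu>) \<and>
     vc C \<mu> (rw C \<eta> t) = id2 C t \<and> vc C \<mu> (lw C t \<eta>) = id2 C t"

definition is_alg :: "('o,'a,'c) twocat \<Rightarrow> 'o \<Rightarrow> 'o \<Rightarrow> 'a \<Rightarrow> 'c \<Rightarrow> 'c \<Rightarrow> 'a \<Rightarrow> 'c \<Rightarrow> bool" where
  "is_alg C l k t \<mu> \<eta> A \<alpha> \<longleftrightarrow>
     hom1 C A l k \<and> hom2 C \<alpha> (cp1 C t A) A \<and>
     vc C \<alpha> (rw C \<eta> A) = id2 C A \<and> vc C \<alpha> (lw C t \<alpha>) = vc C \<alpha> (rw C \<mu> A)"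

definition alg_mor :: "('o,'a,'c) twocat \<Rightarrow> 'a \<Rightarrow> 'a \<Rightarrow> 'c \<Rightarrow> 'a \<Rightarrow> 'c \<Rightarrow> 'c \<Rightarrow> bool" where
  "alg_mor C t A \<alpha> B \<beta> \<rho> \<longleftrightarrow> hom2 C \<rho> A B \<and> vc C \<beta> (lw C t \<rho>) = vc C \<rho> \<alpha>"

text \<open>Eilenberg--Moore object J of the monad t on k: adjunction f -| v with unit eta,
counit eps, t = vf, mu = v eps f, and X |-> (vX, v eps X), omega |-> v omega an isomorphism
from K(l, J) onto the category of t-algebras with domain l, for every l.\<close>
definition em_object :: "('o,'a,'c) twocat \<Rightarrow> 'o \<Rightarrow> 'a \<Rightarrow> 'c \<Rightarrow> 'c \<Rightarrow>
    'o \<Rightarrow> 'a \<Rightarrow> 'a \<Rightarrow> 'c \<Rightarrow> bool" where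
  "em_object C k t \<mu> \<eta> J f v \<epsilon> \<longleftrightarrow>
     hom1 C f k J \<and> hom1 C v J k \<and> hom2 C \<epsilon> (cp1 C f v) (id1 C J) \<and>
     t = cp1 C v f \<and> \<mu> = lw C v (rw C \<epsilon> f) \<and>
     vc C (rw C \<epsilon> f) (lw C f \<eta>) = id2 C f \<and>
     vc C (lw C v \<epsilon>) (rw C \<eta> v) = id2 C v \<and>
     (\<forall>l A \<alpha>. is_alg C l k t \<mu> \<eta> A \<alpha> \<longrightarrow>
        (\<exists>!X. hom1 C X l J \<and> cp1 C v X = A \<and> lw C v (rw C \<epsilon> X) = \<alpha>)) \<and>
     (\<forall>l X Y \<rho>. hom1 C X l J \<longrightarrow> hom1 C Y l J \<longrightarrow>
        alg_mor C t (cp1 C v X) (lw C v (rw C \<epsilon> X)) (cp1 C v Y) (lw C v (rw C \<epsilon> Y)) \<rho> \<longrightarrow>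
        (\<exists>!\<omega>. hom2 C \<omega> X Y \<and> lw C v \<omega> = \<rho>))"

definition admits_EM :: "('o,'a,'c) twocat \<Rightarrow> bool" where
  "admits_EM C \<longleftrightarrow> (\<forall>k t \<mu> \<eta>. is_monad C k t \<mu> \<eta> \<longrightarrow>
      (\<exists>J f v \<epsilon>. em_object C k t \<mu> \<eta> J f v \<epsilon>))"

definition is_splitting :: "('o,'a,'c) twocat \<Rightarrow> 'c \<Rightarrow> 'a \<Rightarrow> 'c \<Rightarrow> 'c \<Rightarrow> bool" where
  "is_splitting C e Y p i \<longleftrightarrow>
     hom2 C p (dom2 C e) Y \<and> hom2 C i Y (dom2 C e) \<and> vc C i p = e \<and> vc C p i = id2 C Y"

definition idempotents_split :: "('o,'a,'c) twocat \<Rightarrow> bool" where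
  "idempotents_split C \<longleftrightarrow> (\<forall>e X. hom2 C e X X \<and> vc C e e = e \<longrightarrow>
      (\<exists>Y p i. is_splitting C e Y p i))"

definition emw1 :: "('o,'a,'c) twocat \<Rightarrow> 'a \<Rightarrow> 'c \<Rightarrow> 'a \<Rightarrow> 'c \<Rightarrow> 'a \<Rightarrow> 'c \<Rightarrow> bool" where
  "emw1 C t \<mu> t' \<mu>' V \<psi> \<longleftrightarrow>
     hom1 C V (dom1 C t) (dom1 C t') \<and> hom2 C \<psi> (cp1 C t' V) (cp1 C V t) \<and>
     vc C (lw C V \<mu>) (vc C (rw C \<psi> t) (lw C t' \<psi>)) = vc C \<psi> (rw C \<mu>' V)"

definition emw2 :: "('o,'a,'c) twocat \<Rightarrow> 'a \<Rightarrow> 'c \<Rightarrow> 'a \<Rightarrow> 'c \<Rightarrow>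
    'a \<Rightarrow> 'c \<Rightarrow> 'a \<Rightarrow> 'c \<Rightarrow> 'c \<Rightarrow> bool" where
  "emw2 C t \<mu> t' \<eta>' V \<psi> W \<phi> \<rho> \<longleftrightarrow>
     hom2 C \<rho> V (cp1 C W t) \<and>
     vc C (lw C W \<mu>) (vc C (rw C \<rho> t) \<psi>) = vc C (lw C W \<mu>) (vc C (rw C \<phi> t) (lw C t' \<rho>)) \<and>
     \<rho> = vc C (lw C W \<mu>) (vc C (rw C \<phi> t) (vc C (rw C \<eta>' (cp1 C W t)) \<rho>))"

definition emw_idem :: "('o,'a,'c) twocat \<Rightarrow> 'a \<Rightarrow> 'c \<Rightarrow> 'c \<Rightarrow> 'a \<Rightarrow> 'c \<Rightarrow> 'c" where
  "emw_idem C v \<epsilon> \<eta>' V \<psi> =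
     vc C (lw C (cp1 C V v) \<epsilon>) (vc C (rw C \<psi> v) (rw C \<eta>' (cp1 C V v)))"

text \<open>J^w on 1-cells, given the chosen splitting (Vt, pi, iota) of the idempotent:
the unique X : J -> J' with v'X = Vt and v' eps' X = pi * Vv eps * psi v * t' iota.\<close>
definition Jw1 :: "('o,'a,'c) twocat \<Rightarrow> 'a \<Rightarrow> 'c \<Rightarrow> 'a \<Rightarrow> 'a \<Rightarrow> 'c \<Rightarrow> 'o \<Rightarrow> 'o \<Rightarrow>
    'a \<Rightarrow> 'c \<Rightarrow> 'a \<Rightarrow> 'c \<Rightarrow> 'c \<Rightarrow> 'a" where
  "Jw1 C v \<epsilon> t' v' \<epsilon>' J J' V \<psi> Vt \<pi> \<iota> =
     (THE X. hom1 C X J J' \<and> cp1 C v' X = Vt \<and>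
        lw C v' (rw C \<epsilon>' X) =
          vc C \<pi> (vc C (lw C (cp1 C V v) \<epsilon>) (vc C (rw C \<psi> v) (lw C t' \<iota>))))"

definition Jw2 :: "('o,'a,'c) twocat \<Rightarrow> 'a \<Rightarrow> 'c \<Rightarrow> 'a \<Rightarrow> 'a \<Rightarrow> 'a \<Rightarrow>
    'a \<Rightarrow> 'c \<Rightarrow> 'c \<Rightarrow> 'c \<Rightarrow> 'c" where
  "Jw2 C v \<epsilon> v' XV XW W \<pi>W \<iota>V \<rho> =
     (THE \<sigma>. hom2 C \<sigma> XV XW \<and>
        lw C v' \<sigma> = vc C \<pi>W (vc C (lw C (cp1 C W v) \<epsilon>) (vc C (rw C \<rho> v) \<iota>V)))"

definition weak_iota_lifting :: "('o,'a,'c) twocat \<Rightarrow> 'a \<Rightarrow> 'a \<Rightarrow> 'a \<Rightarrow> 'c \<Rightarrow> 'c \<Rightarrow>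
    'a \<Rightarrow> 'c \<Rightarrow> 'c \<Rightarrow> bool" where
  "weak_iota_lifting C v' XV XW \<iota>V \<iota>W v \<omega> \<theta> \<longleftrightarrow>
     hom2 C \<theta> XV XW \<and> vc C \<iota>W (lw C v' \<theta>) = vc C (rw C \<omega> v) \<iota>V"

definition weak_pi_lifting :: "('o,'a,'c) twocat \<Rightarrow> 'a \<Rightarrow> 'a \<Rightarrow> 'a \<Rightarrow> 'c \<Rightarrow> 'c \<Rightarrow>
    'a \<Rightarrow> 'c \<Rightarrow> 'c \<Rightarrow> bool" where
  "weak_pi_lifting C v' XV XW \<pi>V \<pi>W v \<omega> \<theta> \<longleftrightarrow>
     hom2 C \<theta> XV XW \<and> vc C (lw C v' \<theta>) \<pi>V = vc C \<pi>W (rw C \<omega> v)"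

end

theory Submission
  imports Defs
begin

locale tc = fixes C :: "('o,'a,'c) twocat" assumes tc: "two_category C"
begin

lemmas AX = tc[unfolded two_category_def]
lemmas A1 = AX[THEN conjunct1]
lemmas A2 = AX[THEN conjunct2, THEN conjunct1]
lemmas A3 = AX[THEN conjunct2, THEN conjunct2, THEN conjunct1]
lemmas A4 = AX[THEN conjunct2, THEN conjunct2, THEN conjunct2, THEN conjunct1]
lemmas A5 = AX[THEN conjunct2, THEN conjunct2, THEN conjunct2, THEN conjunct2, THEN conjunct1]
lemmas A6 = AX[THEN conjunct2, THEN conjunct2, THEN conjunct2, THEN conjunct2, THEN conjunct2, THEN conjunct1]
lemmas A7 = AX[THEN conjunct2, THEN conjunct2, THEN conjunct2, THEN conjunct2, THEN conjunct2, THEN conjunct2, THEN conjunct1]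
lemmas A8 = AX[THEN conjunct2, THEN conjunct2, THEN conjunct2, THEN conjunct2, THEN conjunct2, THEN conjunct2, THEN conjunct2, THEN conjunct1]
lemmas A9 = AX[THEN conjunct2, THEN conjunct2, THEN conjunct2, THEN conjunct2, THEN conjunct2, THEN conjunct2, THEN conjunct2, THEN conjunct2, THEN conjunct1]
lemmas A10 = AX[THEN conjunct2, THEN conjunct2, THEN conjunct2, THEN conjunct2, THEN conjunct2, THEN conjunct2, THEN conjunct2, THEN conjunct2, THEN conjunct2, THEN conjunct1]
lemmas A11 = AX[THEN conjunct2, THEN conjunct2, THEN conjunct2, THEN conjunct2, THEN conjunct2, THEN conjunct2, THEN conjunct2, THEN conjunct2, THEN conjunct2, THEN conjunct2, THEN conjunct1]
lemmas A12 = AX[THEN conjunct2, THEN conjunct2, THEN conjunct2, THEN conjunct2, THEN conjunct2, THEN conjunct2, THEN conjunct2, THEN conjunct2, THEN conjunct2, THEN conjunct2, THEN conjunct2, THEN conjunct1]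
lemmas A13 = AX[THEN conjunct2, THEN conjunct2, THEN conjunct2, THEN conjunct2, THEN conjunct2, THEN conjunct2, THEN conjunct2, THEN conjunct2, THEN conjunct2, THEN conjunct2, THEN conjunct2, THEN conjunct2, THEN conjunct1]
lemmas A14 = AX[THEN conjunct2, THEN conjunct2, THEN conjunct2, THEN conjunct2, THEN conjunct2, THEN conjunct2, THEN conjunct2, THEN conjunct2, THEN conjunct2, THEN conjunct2, THEN conjunct2, THEN conjunct2, THEN conjunct2]

lemma id1_dom[simp]: "dom1 C (id1 C k) = k" and id1_cod[simp]: "cod1 C (id1 C k) = k"
  using tc unfolding two_category_def by auto

lemma cp1_dom[simp]: "dom1 C g = cod1 C f \<Longrightarrow> dom1 C (cp1 C g f) = dom1 C f"
  and cp1_cod[simp]: "dom1 C g = cod1 C f \<Longrightarrow> cod1 C (cp1 C g f) = cod1 C g"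
  using A2 by auto

lemma cp1_idr[simp]: "dom1 C f = k \<Longrightarrow> cp1 C f (id1 C k) = f"
  and cp1_idl[simp]: "cod1 C f = k \<Longrightarrow> cp1 C (id1 C k) f = f"
  using A3 by auto

lemma cp1_assoc[simp]: "dom1 C h = cod1 C g \<Longrightarrow> dom1 C g = cod1 C f \<Longrightarrow>
   cp1 C (cp1 C h g) f = cp1 C h (cp1 C g f)"
  using A4 by auto

lemma dom1_cod2[simp]: "dom1 C (cod2 C \<alpha>) = dom1 C (dom2 C \<alpha>)"
  and cod1_cod2[simp]: "cod1 C (cod2 C \<alpha>) = cod1 C (dom2 C \<alpha>)"
  using A5 by auto

lemma id2_dom[simp]: "dom2 C (id2 C f) = f" and id2_cod[simp]: "cod2 C (id2 C f) = f"
  using A6 by auto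

lemma vc_dom[simp]: "dom2 C \<beta> = cod2 C \<alpha> \<Longrightarrow> dom2 C (vc C \<beta> \<alpha>) = dom2 C \<alpha>"
  and vc_cod[simp]: "dom2 C \<beta> = cod2 C \<alpha> \<Longrightarrow> cod2 C (vc C \<beta> \<alpha>) = cod2 C \<beta>"
  using A7 by auto

lemma vc_idl[simp]: "cod2 C \<alpha> = A \<Longrightarrow> vc C (id2 C A) \<alpha> = \<alpha>"
  and vc_idr[simp]: "dom2 C \<alpha> = A \<Longrightarrow> vc C \<alpha> (id2 C A) = \<alpha>"
  using A8 by auto

lemma vc_assoc[simp]: "dom2 C \<gamma> = cod2 C \<beta> \<Longrightarrow> dom2 C \<beta> = cod2 C \<alpha> \<Longrightarrow>
    vc C (vc C \<gamma> \<beta>) \<alpha> = vc C \<gamma> (vc C \<beta> \<alpha>)"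
  using A9 by auto

lemma hc_dom: "dom1 C (dom2 C \<beta>) = cod1 C (dom2 C \<alpha>) \<Longrightarrow>
        dom2 C (hc C \<beta> \<alpha>) = cp1 C (dom2 C \<beta>) (dom2 C \<alpha>)"
  and hc_cod: "dom1 C (dom2 C \<beta>) = cod1 C (dom2 C \<alpha>) \<Longrightarrow>
        cod2 C (hc C \<beta> \<alpha>) = cp1 C (cod2 C \<beta>) (cod2 C \<alpha>)"
  using A10 by auto

lemma hc_idr: "hc C \<alpha> (id2 C (id1 C (dom1 C (dom2 C \<alpha>)))) = \<alpha>"
  and hc_idl: "hc C (id2 C (id1 C (cod1 C (dom2 C \<alpha>)))) \<alpha> = \<alpha>"
  using A11 by auto

lemma hc_assoc: "dom1 C (dom2 C \<gamma>) = cod1 C (dom2 C \<beta>) \<Longrightarrow>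
        dom1 C (dom2 C \<beta>) = cod1 C (dom2 C \<alpha>) \<Longrightarrow>
        hc C (hc C \<gamma> \<beta>) \<alpha> = hc C \<gamma> (hc C \<beta> \<alpha>)"
  using A12 by auto

lemma hc_id2: "dom1 C g = cod1 C f \<Longrightarrow> hc C (id2 C g) (id2 C f) = id2 C (cp1 C g f)"
  using A13 by auto

lemma interchange: "dom2 C \<beta>' = cod2 C \<beta> \<Longrightarrow> dom2 C \<alpha>' = cod2 C \<alpha> \<Longrightarrow>
        dom1 C (dom2 C \<beta>) = cod1 C (dom2 C \<alpha>) \<Longrightarrow>
        hc C (vc C \<beta>' \<beta>) (vc C \<alpha>' \<alpha>) = vc C (hc C \<beta>' \<alpha>') (hc C \<beta> \<alpha>)"
  using A14 by blast

lemma lw_dom[simp]: "dom1 C f = cod1 C (dom2 C \<alpha>) \<Longrightarrow> dom2 C (lw C f \<alpha>) = cp1 C f (dom2 C \<alpha>)"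
  and lw_cod[simp]: "dom1 C f = cod1 C (dom2 C \<alpha>) \<Longrightarrow> cod2 C (lw C f \<alpha>) = cp1 C f (cod2 C \<alpha>)"
  unfolding lw_def by (simp_all add: hc_dom hc_cod)

lemma rw_dom[simp]: "dom1 C (dom2 C \<alpha>) = cod1 C f \<Longrightarrow> dom2 C (rw C \<alpha> f) = cp1 C (dom2 C \<alpha>) f"
  and rw_cod[simp]: "dom1 C (dom2 C \<alpha>) = cod1 C f \<Longrightarrow> cod2 C (rw C \<alpha> f) = cp1 C (cod2 C \<alpha>) f"
  unfolding rw_def by (simp_all add: hc_dom hc_cod)

lemma lw_vc[simp]: "dom2 C \<beta> = cod2 C \<alpha> \<Longrightarrow> dom1 C f = cod1 C (dom2 C \<alpha>) \<Longrightarrow>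
   lw C f (vc C \<beta> \<alpha>) = vc C (lw C f \<beta>) (lw C f \<alpha>)"
  unfolding lw_def using interchange[of "id2 C f" "id2 C f" \<beta> \<alpha>] by simp

lemma rw_vc[simp]: "dom2 C \<beta> = cod2 C \<alpha> \<Longrightarrow> dom1 C (dom2 C \<alpha>) = cod1 C f \<Longrightarrow>
   rw C (vc C \<beta> \<alpha>) f = vc C (rw C \<beta> f) (rw C \<alpha> f)"
  unfolding rw_def using interchange[of \<beta> \<alpha> "id2 C f" "id2 C f"] by simp

lemma lw_lw[simp]: "dom1 C f = cod1 C g \<Longrightarrow> dom1 C g = cod1 C (dom2 C \<alpha>) \<Longrightarrow>
   lw C f (lw C g \<alpha>) = lw C (cp1 C f g) \<alpha>"
  unfolding lw_def by (simp add: hc_assoc[symmetric] hc_id2)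

lemma rw_rw[simp]: "dom1 C g = cod1 C f \<Longrightarrow> dom1 C (dom2 C \<alpha>) = cod1 C g \<Longrightarrow>
   rw C (rw C \<alpha> g) f = rw C \<alpha> (cp1 C g f)"
  unfolding rw_def by (simp add: hc_assoc hc_id2)

lemma lw_rw[simp]: "dom1 C f = cod1 C (dom2 C \<alpha>) \<Longrightarrow> dom1 C (dom2 C \<alpha>) = cod1 C g \<Longrightarrow>
   lw C f (rw C \<alpha> g) = rw C (lw C f \<alpha>) g"
  unfolding rw_def lw_def by (simp add: hc_assoc)

lemma lw_id2[simp]: "dom1 C f = cod1 C A \<Longrightarrow> lw C f (id2 C A) = id2 C (cp1 C f A)"
  unfolding lw_def by (simp add: hc_id2)

lemma rw_id2[simp]: "dom1 C A = cod1 C f \<Longrightarrow> rw C (id2 C A) f = id2 C (cp1 C A f)"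
  unfolding rw_def by (simp add: hc_id2)

lemma lw_id1[simp]: "cod1 C (dom2 C \<alpha>) = k \<Longrightarrow> lw C (id1 C k) \<alpha> = \<alpha>"
  unfolding lw_def by (metis hc_idl)

lemma rw_id1[simp]: "dom1 C (dom2 C \<alpha>) = k \<Longrightarrow> rw C \<alpha> (id1 C k) = \<alpha>"
  unfolding rw_def by (metis hc_idr)

lemma nat: "dom1 C (dom2 C \<alpha>) = cod1 C (dom2 C \<beta>) \<Longrightarrow>
   vc C (rw C \<alpha> (cod2 C \<beta>)) (lw C (dom2 C \<alpha>) \<beta>) = vc C (lw C (cod2 C \<alpha>) \<beta>) (rw C \<alpha> (dom2 C \<beta>))"
proof -
  assume a: "dom1 C (dom2 C \<alpha>) = cod1 C (dom2 C \<beta>)"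
  have "hc C \<alpha> \<beta> = hc C (vc C \<alpha> (id2 C (dom2 C \<alpha>))) (vc C (id2 C (cod2 C \<beta>)) \<beta>)" by simp
  also have "\<dots> = vc C (rw C \<alpha> (cod2 C \<beta>)) (lw C (dom2 C \<alpha>) \<beta>)"
    unfolding rw_def lw_def using a interchange[of \<alpha> "id2 C (dom2 C \<alpha>)" "id2 C (cod2 C \<beta>)" \<beta>] by simp
  finally have 1: "hc C \<alpha> \<beta> = \<dots>" .
  have "hc C \<alpha> \<beta> = hc C (vc C (id2 C (cod2 C \<alpha>)) \<alpha>) (vc C \<beta> (id2 C (dom2 C \<beta>)))" by simp
  also have "\<dots> = vc C (lw C (cod2 C \<alpha>) \<beta>) (rw C \<alpha> (dom2 C \<beta>))"
    unfolding rw_def lw_def using a interchange[of "id2 C (cod2 C \<alpha>)" \<alpha> \<beta> "id2 C (dom2 C \<beta>)"] by simp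
  finally show ?thesis using 1 by simp
qed

lemma rest: "vc C a b = X \<Longrightarrow> dom2 C a = cod2 C b \<Longrightarrow> dom2 C b = cod2 C r \<Longrightarrow>
   vc C a (vc C b r) = vc C X r"
proof -
  assume e: "vc C a b = X" and h: "dom2 C a = cod2 C b" "dom2 C b = cod2 C r"
  have "vc C (vc C a b) r = vc C a (vc C b r)" using h by (rule vc_assoc)
  then show ?thesis using e by simp
qed

lemma rest3: "vc C a (vc C b c) = X \<Longrightarrow> dom2 C a = cod2 C b \<Longrightarrow> dom2 C b = cod2 C c \<Longrightarrow>
   dom2 C c = cod2 C r \<Longrightarrow> vc C a (vc C b (vc C c r)) = vc C X r"
proof -
  assume e: "vc C a (vc C b c) = X" and h: "dom2 C a = cod2 C b" "dom2 C b = cod2 C c" "dom2 C c = cod2 C r"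
  have "vc C (vc C a (vc C b c)) r = vc C a (vc C (vc C b c) r)" using h by (intro vc_assoc) simp_all
  also have "\<dots> = vc C a (vc C b (vc C c r))" using h by simp
  finally show ?thesis using e by simp
qed

end

locale setting = tc C for C :: "('o,'a,'c) twocat" +
  fixes k t \<mu> \<eta> k' t' \<mu>' \<eta>' J f v \<epsilon> J' f' v' \<epsilon>'
  assumes mon: "is_monad C k t \<mu> \<eta>" and mon': "is_monad C k' t' \<mu>' \<eta>'"
  and em: "em_object C k t \<mu> \<eta> J f v \<epsilon>" and em': "em_object C k' t' \<mu>' \<eta>' J' f' v' \<epsilon>'"
begin

lemma t_eq[simp]: "t = cp1 C v f" and mu_eq[simp]: "\<mu> = lw C v (rw C \<epsilon> f)"
  using em unfolding em_object_def by auto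

lemma ty1[simp]: "dom1 C v = J" "cod1 C v = k" "dom1 C f = k" "cod1 C f = J"
   "dom2 C \<epsilon> = cp1 C f v" "cod2 C \<epsilon> = id1 C J"
   "dom1 C v' = J'" "cod1 C v' = k'" "dom1 C f' = k'" "cod1 C f' = J'"
   "dom2 C \<epsilon>' = cp1 C f' v'" "cod2 C \<epsilon>' = id1 C J'"
  using em em' unfolding em_object_def hom1_def hom2_def by auto

lemma ty2[simp]: "dom2 C \<eta> = id1 C k" "cod2 C \<eta> = cp1 C v f"
   "dom1 C t' = k'" "cod1 C t' = k'" "dom2 C \<mu>' = cp1 C t' t'" "cod2 C \<mu>' = t'"
   "dom2 C \<eta>' = id1 C k'" "cod2 C \<eta>' = t'"
  using mon mon' unfolding is_monad_def hom1_def hom2_def by auto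

lemma tri1: "vc C (rw C \<epsilon> f) (lw C f \<eta>) = id2 C f"
  and tri2: "vc C (lw C v \<epsilon>) (rw C \<eta> v) = id2 C v"
  using em unfolding em_object_def by auto

lemma mon'_assoc: "vc C \<mu>' (rw C \<mu>' t') = vc C \<mu>' (lw C t' \<mu>')"
  and mon'_l: "vc C \<mu>' (rw C \<eta>' t') = id2 C t'"
  and mon'_r: "vc C \<mu>' (lw C t' \<eta>') = id2 C t'"
  using mon' unfolding is_monad_def by auto

lemma t'_eq: "t' = cp1 C v' f'"
  using em' unfolding em_object_def by auto

lemma eps_assoc: "vc C \<epsilon> (lw C (cp1 C f v) \<epsilon>) = vc C \<epsilon> (rw C \<epsilon> (cp1 C f v))"
  using nat[of \<epsilon> \<epsilon>] by simp

definition beta where "beta W \<phi> = vc C (lw C (cp1 C W v) \<epsilon>) (rw C \<phi> v)"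
definition eid where "eid W \<phi> = vc C (beta W \<phi>) (rw C \<eta>' (cp1 C W v))"

definition good where "good W \<phi> \<longleftrightarrow> dom1 C W = k \<and> cod1 C W = k' \<and>
   dom2 C \<phi> = cp1 C t' W \<and> cod2 C \<phi> = cp1 C W (cp1 C v f)"

lemma emw1_good: "emw1 C t \<mu> t' \<mu>' W \<phi> \<Longrightarrow> good W \<phi>"
  unfolding emw1_def good_def hom1_def hom2_def by auto

lemma emw1_eq: "emw1 C t \<mu> t' \<mu>' W \<phi> \<Longrightarrow>
  vc C (rw C (lw C (cp1 C W v) \<epsilon>) f) (vc C (rw C \<phi> (cp1 C v f)) (lw C t' \<phi>)) = vc C \<phi> (rw C \<mu>' W)"
  unfolding emw1_def hom1_def hom2_def by auto

lemma good_d: "good W \<phi> \<Longrightarrow> dom1 C W = k" "good W \<phi> \<Longrightarrow> cod1 C W = k'"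
  "good W \<phi> \<Longrightarrow> dom2 C \<phi> = cp1 C t' W" "good W \<phi> \<Longrightarrow> cod2 C \<phi> = cp1 C W (cp1 C v f)"
  unfolding good_def by auto

lemma beta_ty[simp]: "good W \<phi> \<Longrightarrow> dom2 C (beta W \<phi>) = cp1 C t' (cp1 C W v)"
   "good W \<phi> \<Longrightarrow> cod2 C (beta W \<phi>) = cp1 C W v"
  unfolding beta_def by (simp_all add: good_d)

lemma eid_ty[simp]: "good W \<phi> \<Longrightarrow> dom2 C (eid W \<phi>) = cp1 C W v"
   "good W \<phi> \<Longrightarrow> cod2 C (eid W \<phi>) = cp1 C W v"
  unfolding eid_def by (simp_all add: good_d)

end

context setting begin

lemma unitl_w: "cod1 C X = k' \<Longrightarrow> vc C (rw C \<mu>' X) (rw C \<eta>' (cp1 C t' X)) = id2 C (cp1 C t' X)"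
  using arg_cong[OF mon'_l, of "\<lambda>x. rw C x X"] by simp

lemma unitr_w: "cod1 C X = k' \<Longrightarrow> vc C (rw C \<mu>' X) (rw C (lw C t' \<eta>') X) = id2 C (cp1 C t' X)"
  using arg_cong[OF mon'_r, of "\<lambda>x. rw C x X"] by simp

lemma beta_assoc:
  assumes e: "emw1 C t \<mu> t' \<mu>' W \<phi>"
  shows "vc C (beta W \<phi>) (lw C t' (beta W \<phi>)) = vc C (beta W \<phi>) (rw C \<mu>' (cp1 C W v))"
proof -
  have g: "good W \<phi>" using e by (rule emw1_good)
  note [simp] = good_d[OF g]
  have n1: "vc C (rw C \<phi> v) (lw C (cp1 C t' (cp1 C W v)) \<epsilon>) = vc C (lw C (cp1 C W (cp1 C v (cp1 C f v))) \<epsilon>) (rw C \<phi> (cp1 C v (cp1 C f v)))"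
    using nat[of \<phi> "lw C v \<epsilon>"] by simp
  have n2: "vc C (lw C (cp1 C W v) \<epsilon>) (lw C (cp1 C W (cp1 C v (cp1 C f v))) \<epsilon>) = vc C (lw C (cp1 C W v) \<epsilon>) (rw C (lw C (cp1 C W v) \<epsilon>) (cp1 C f v))"
    using arg_cong[OF eps_assoc, of "lw C (cp1 C W v)"] by simp
  have n3: "vc C (rw C (lw C (cp1 C W v) \<epsilon>) (cp1 C f v)) (vc C (rw C \<phi> (cp1 C v (cp1 C f v))) (rw C (lw C t' \<phi>) v)) = vc C (rw C \<phi> v) (rw C \<mu>' (cp1 C W v))"
    using arg_cong[OF emw1_eq[OF e], of "\<lambda>x. rw C x v"] by simp
  show ?thesis unfolding beta_def by (simp add: rest[OF n1] rest[OF n2] n3)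
qed

lemma eid_beta:
  assumes e: "emw1 C t \<mu> t' \<mu>' W \<phi>"
  shows "vc C (eid W \<phi>) (beta W \<phi>) = beta W \<phi>"
proof -
  have g: "good W \<phi>" using e by (rule emw1_good)
  note [simp] = good_d[OF g]
  have n: "vc C (rw C \<eta>' (cp1 C W v)) (beta W \<phi>) = vc C (lw C t' (beta W \<phi>)) (rw C \<eta>' (cp1 C t' (cp1 C W v)))"
    using nat[of \<eta>' "beta W \<phi>"] g by simp
  have "vc C (eid W \<phi>) (beta W \<phi>) = vc C (beta W \<phi>) (vc C (rw C \<eta>' (cp1 C W v)) (beta W \<phi>))"
    unfolding eid_def using g by simp
  also have "\<dots> = vc C (vc C (beta W \<phi>) (lw C t' (beta W \<phi>))) (rw C \<eta>' (cp1 C t' (cp1 C W v)))"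
    using g by (simp add: n)
  also have "\<dots> = vc C (beta W \<phi>) (vc C (rw C \<mu>' (cp1 C W v)) (rw C \<eta>' (cp1 C t' (cp1 C W v))))"
    using g by (simp add: beta_assoc[OF e])
  also have "\<dots> = beta W \<phi>" using g by (simp add: unitl_w)
  finally show ?thesis .
qed

lemma beta_eid:
  assumes e: "emw1 C t \<mu> t' \<mu>' W \<phi>"
  shows "vc C (beta W \<phi>) (lw C t' (eid W \<phi>)) = beta W \<phi>"
proof -
  have g: "good W \<phi>" using e by (rule emw1_good)
  note [simp] = good_d[OF g]
  have "vc C (beta W \<phi>) (lw C t' (eid W \<phi>)) = vc C (vc C (beta W \<phi>) (lw C t' (beta W \<phi>))) (rw C (lw C t' \<eta>') (cp1 C W v))"
    unfolding eid_def using g by simp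
  also have "\<dots> = vc C (beta W \<phi>) (vc C (rw C \<mu>' (cp1 C W v)) (rw C (lw C t' \<eta>') (cp1 C W v)))"
    using g by (simp add: beta_assoc[OF e])
  also have "\<dots> = beta W \<phi>" using g by (simp add: unitr_w)
  finally show ?thesis .
qed

end

context setting begin

lemma idem_eq: "good W \<phi> \<Longrightarrow> emw_idem C v \<epsilon> \<eta>' W \<phi> = eid W \<phi>"
  unfolding emw_idem_def eid_def beta_def by (simp add: good_d)

definition alpha where "alpha W \<phi> \<iota> \<pi> = vc C \<pi> (vc C (beta W \<phi>) (lw C t' \<iota>))"

lemma split_d:
  assumes g: "good W \<phi>" and s: "is_splitting C (emw_idem C v \<epsilon> \<eta>' W \<phi>) Wt \<pi> \<iota>"
  shows "dom2 C \<pi> = cp1 C W v" "cod2 C \<pi> = Wt" "dom2 C \<iota> = Wt" "cod2 C \<iota> = cp1 C W v"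
    "vc C \<iota> \<pi> = eid W \<phi>" "vc C \<pi> \<iota> = id2 C Wt" "dom1 C Wt = J" "cod1 C Wt = k'"
proof -
  have s': "is_splitting C (eid W \<phi>) Wt \<pi> \<iota>" using s idem_eq[OF g] by simp
  show 1: "dom2 C \<pi> = cp1 C W v" "cod2 C \<pi> = Wt" "dom2 C \<iota> = Wt" "cod2 C \<iota> = cp1 C W v"
    "vc C \<iota> \<pi> = eid W \<phi>" "vc C \<pi> \<iota> = id2 C Wt"
    using s' g unfolding is_splitting_def hom2_def by auto
  have "dom1 C Wt = dom1 C (cp1 C W v)" "cod1 C Wt = cod1 C (cp1 C W v)"
    using dom1_cod2[of \<pi>] cod1_cod2[of \<pi>] 1 by simp_all
  then show "dom1 C Wt = J" "cod1 C Wt = k'" using g by (simp_all add: good_d)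
qed

lemma alg:
  assumes e: "emw1 C t \<mu> t' \<mu>' W \<phi>" and s: "is_splitting C (emw_idem C v \<epsilon> \<eta>' W \<phi>) Wt \<pi> \<iota>"
  shows "is_alg C J k' t' \<mu>' \<eta>' Wt (alpha W \<phi> \<iota> \<pi>)"
proof -
  have g: "good W \<phi>" using e by (rule emw1_good)
  note [simp] = good_d[OF g] split_d(1-4,7,8)[OF g s]
  have ip: "vc C \<iota> (vc C \<pi> r) = vc C (eid W \<phi>) r" if "cod2 C r = cp1 C W v" for r
    using that by (simp add: rest[OF split_d(5)[OF g s]])
  have pi: "vc C \<pi> (vc C \<iota> r) = r" if "cod2 C r = Wt" for r
    using that by (simp add: rest[OF split_d(6)[OF g s]])
  have tip: "vc C (lw C t' \<iota>) (lw C t' \<pi>) = lw C t' (eid W \<phi>)"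
    using arg_cong[OF split_d(5)[OF g s], of "lw C t'"] g by simp
  have n1: "vc C (rw C \<eta>' (cp1 C W v)) \<iota> = vc C (lw C t' \<iota>) (rw C \<eta>' Wt)"
    using nat[of \<eta>' \<iota>] by simp
  have n2: "vc C (rw C \<mu>' (cp1 C W v)) (lw C (cp1 C t' t') \<iota>) = vc C (lw C t' \<iota>) (rw C \<mu>' Wt)"
    using nat[of \<mu>' \<iota>] by simp
  have u: "vc C (alpha W \<phi> \<iota> \<pi>) (rw C \<eta>' Wt) = id2 C Wt"
  proof -
    have "vc C (alpha W \<phi> \<iota> \<pi>) (rw C \<eta>' Wt) = vc C \<pi> (vc C (beta W \<phi>) (vc C (rw C \<eta>' (cp1 C W v)) \<iota>))"
      unfolding alpha_def using g by (simp add: n1)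
    also have "\<dots> = vc C \<pi> (vc C (eid W \<phi>) \<iota>)" unfolding eid_def using g by simp
    also have "\<dots> = vc C \<pi> (vc C \<iota> (vc C \<pi> \<iota>))" using g by (simp add: ip)
    also have "\<dots> = id2 C Wt" by (simp add: pi split_d(6)[OF g s])
    finally show ?thesis .
  qed
  have a: "vc C (alpha W \<phi> \<iota> \<pi>) (lw C t' (alpha W \<phi> \<iota> \<pi>)) = vc C (alpha W \<phi> \<iota> \<pi>) (rw C \<mu>' Wt)"
  proof -
    have "vc C (alpha W \<phi> \<iota> \<pi>) (lw C t' (alpha W \<phi> \<iota> \<pi>)) =
      vc C \<pi> (vc C (beta W \<phi>) (vc C (vc C (lw C t' \<iota>) (lw C t' \<pi>)) (vc C (lw C t' (beta W \<phi>)) (lw C (cp1 C t' t') \<iota>))))"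
      unfolding alpha_def using g by simp
    also have "\<dots> = vc C \<pi> (vc C (vc C (beta W \<phi>) (lw C t' (eid W \<phi>))) (vc C (lw C t' (beta W \<phi>)) (lw C (cp1 C t' t') \<iota>)))"
      unfolding tip using g by simp
    also have "\<dots> = vc C \<pi> (vc C (vc C (beta W \<phi>) (lw C t' (beta W \<phi>))) (lw C (cp1 C t' t') \<iota>))"
      unfolding beta_eid[OF e] using g by simp
    also have "\<dots> = vc C \<pi> (vc C (beta W \<phi>) (vc C (rw C \<mu>' (cp1 C W v)) (lw C (cp1 C t' t') \<iota>)))"
      unfolding beta_assoc[OF e] using g by simp
    also have "\<dots> = vc C (alpha W \<phi> \<iota> \<pi>) (rw C \<mu>' Wt)"
      unfolding n2 alpha_def using g by simp
    finally show ?thesis .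
  qed
  show ?thesis unfolding is_alg_def hom1_def hom2_def using u a g
    unfolding alpha_def by simp
qed

end

locale dpart = tc C for C :: "('o,'a,'c) twocat" +
  fixes k' t' \<eta>' AV AW VT WT bV eV bW eW w iV pV iW pW
  assumes ty[simp]: "dom1 C t' = k'" "cod1 C t' = k'" "dom2 C \<eta>' = id1 C k'" "cod2 C \<eta>' = t'"
    "cod1 C AV = k'" "cod1 C AW = k'" "cod1 C VT = k'" "cod1 C WT = k'"
    "dom2 C bV = cp1 C t' AV" "cod2 C bV = AV" "dom2 C eV = AV" "cod2 C eV = AV"
    "dom2 C bW = cp1 C t' AW" "cod2 C bW = AW" "dom2 C eW = AW" "cod2 C eW = AW"
    "dom2 C w = AV" "cod2 C w = AW"
    "dom2 C iV = VT" "cod2 C iV = AV" "dom2 C pV = AV" "cod2 C pV = VT"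
    "dom2 C iW = WT" "cod2 C iW = AW" "dom2 C pW = AW" "cod2 C pW = WT"
  and eb_V: "vc C eV bV = bV" and be_V: "vc C bV (lw C t' eV) = bV" and bn_V: "vc C bV (rw C \<eta>' AV) = eV"
  and ip_V: "vc C iV pV = eV" and pi_V: "vc C pV iV = id2 C VT"
  and eb_W: "vc C eW bW = bW" and be_W: "vc C bW (lw C t' eW) = bW" and bn_W: "vc C bW (rw C \<eta>' AW) = eW"
  and ip_W: "vc C iW pW = eW" and pi_W: "vc C pW iW = id2 C WT"
begin

lemma dom1_eq: "dom1 C AV = dom1 C VT" "dom1 C AW = dom1 C WT"
  using dom1_cod2[of iV] dom1_cod2[of iW] by simp_all

lemma ee_V: "vc C eV eV = eV" by (simp add: ip_V[symmetric] rest[OF pi_V] pi_V)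
lemma ee_W: "vc C eW eW = eW" by (simp add: ip_W[symmetric] rest[OF pi_W] pi_W)
lemma ei_V: "vc C eV iV = iV" by (simp add: ip_V[symmetric] rest[OF pi_V] pi_V)
lemma ei_W: "vc C eW iW = iW" by (simp add: ip_W[symmetric] rest[OF pi_W] pi_W)
lemma pe_V: "vc C pV eV = pV" by (simp add: ip_V[symmetric] rest[OF pi_V] pi_V)
lemma pe_W: "vc C pW eW = pW" by (simp add: ip_W[symmetric] rest[OF pi_W] pi_W)

lemma tip_V: "vc C (lw C t' iV) (lw C t' pV) = lw C t' eV"
  using arg_cong[OF ip_V, of "lw C t'"] by simp
lemma tip_W: "vc C (lw C t' iW) (lw C t' pW) = lw C t' eW"
  using arg_cong[OF ip_W, of "lw C t'"] by simp
lemma tei_V: "vc C (lw C t' eV) (lw C t' iV) = lw C t' iV"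
  using arg_cong[OF ei_V, of "lw C t'"] by simp
lemma tei_W: "vc C (lw C t' eW) (lw C t' iW) = lw C t' iW"
  using arg_cong[OF ei_W, of "lw C t'"] by simp
lemma tee_V: "vc C (lw C t' eV) (lw C t' eV) = lw C t' eV"
  using arg_cong[OF ee_V, of "lw C t'"] by simp
lemma tee_W: "vc C (lw C t' eW) (lw C t' eW) = lw C t' eW"
  using arg_cong[OF ee_W, of "lw C t'"] by simp

lemma natw: "vc C (rw C \<eta>' AW) w = vc C (lw C t' w) (rw C \<eta>' AV)"
  using nat[of \<eta>' w] by simp
lemma nate: "vc C (rw C \<eta>' AV) eV = vc C (lw C t' eV) (rw C \<eta>' AV)"
  using nat[of \<eta>' eV] by simp

lemmas R = eb_V be_V bn_V ip_V pi_V eb_W be_W bn_W ip_W pi_W ee_V ee_W ei_V ei_W pe_V pe_W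
  tip_V tip_W tei_V tei_W tee_V tee_W
lemmas RR = R rest[OF eb_V] rest[OF be_V] rest[OF bn_V] rest[OF ip_V] rest[OF pi_V]
  rest[OF eb_W] rest[OF be_W] rest[OF bn_W] rest[OF ip_W] rest[OF pi_W]
  rest[OF ee_V] rest[OF ee_W] rest[OF ei_V] rest[OF ei_W] rest[OF pe_V] rest[OF pe_W]
  rest[OF tip_V] rest[OF tip_W] rest[OF tei_V] rest[OF tei_W] rest[OF tee_V] rest[OF tee_W]

definition "S1 \<longleftrightarrow> vc C w bV = vc C bW (vc C (lw C t' w) (lw C t' eV))"
definition "S2 \<longleftrightarrow> vc C bW (lw C t' w) = vc C eW (vc C w bV)"
definition "S3 \<longleftrightarrow> vc C bW (lw C t' w) = vc C w bV"
definition "Cc \<longleftrightarrow> vc C eW (vc C w eV) = vc C w eV"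
definition "Cp \<longleftrightarrow> vc C eW (vc C w eV) = vc C eW w"
definition "Cpp \<longleftrightarrow> vc C eW w = vc C w eV"
definition "AA \<longleftrightarrow> vc C bW (vc C (lw C t' w) (lw C t' eV)) = vc C eW (vc C w bV)"

lemma L1: "S1 \<Longrightarrow> Cc"
proof -
  assume s: S1
  have s': "vc C bW (vc C (lw C t' w) (lw C t' eV)) = vc C w bV" using s unfolding S1_def by simp
  have "vc C eW (vc C w eV) = vc C bW (vc C (rw C \<eta>' AW) (vc C w eV))" by (simp add: RR)
  also have "\<dots> = vc C bW (vc C (lw C t' w) (vc C (rw C \<eta>' AV) eV))" by (simp add: rest[OF natw])
  also have "\<dots> = vc C bW (vc C (lw C t' w) (vc C (lw C t' eV) (rw C \<eta>' AV)))" by (simp add: nate)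
  also have "\<dots> = vc C w (vc C bV (rw C \<eta>' AV))" by (simp add: rest3[OF s'])
  also have "\<dots> = vc C w eV" by (simp add: RR)
  finally show ?thesis unfolding Cc_def .
qed

lemma L2: "S1 \<Longrightarrow> AA"
proof -
  assume s: S1
  have c: Cc using L1 s .
  have c': "vc C eW (vc C w eV) = vc C w eV" using c unfolding Cc_def .
  have "vc C eW (vc C w bV) = vc C eW (vc C w (vc C eV bV))" by (simp add: RR)
  also have "\<dots> = vc C w (vc C eV bV)" by (simp add: rest3[OF c'])
  also have "\<dots> = vc C bW (vc C (lw C t' w) (lw C t' eV))" using s unfolding S1_def by (simp add: RR)
  finally show ?thesis unfolding AA_def by simp
qed

lemma L3: "AA \<Longrightarrow> Cc \<Longrightarrow> S1"
proof -
  assume a: AA and c: Cc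
  have c': "vc C eW (vc C w eV) = vc C w eV" using c unfolding Cc_def .
  have "vc C w bV = vc C w (vc C eV bV)" by (simp add: RR)
  also have "\<dots> = vc C eW (vc C w (vc C eV bV))" by (simp add: rest3[OF c'])
  also have "\<dots> = vc C eW (vc C w bV)" by (simp add: RR)
  also have "\<dots> = vc C bW (vc C (lw C t' w) (lw C t' eV))" using a unfolding AA_def by simp
  finally show ?thesis unfolding S1_def .
qed

lemma L4: "S2 \<Longrightarrow> Cp"
proof -
  assume s: S2
  have s': "vc C eW (vc C w bV) = vc C bW (lw C t' w)" using s unfolding S2_def by simp
  have "vc C eW (vc C w eV) = vc C eW (vc C w (vc C bV (rw C \<eta>' AV)))" by (simp add: RR)
  also have "\<dots> = vc C bW (vc C (lw C t' w) (rw C \<eta>' AV))" by (simp add: rest3[OF s'])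
  also have "\<dots> = vc C bW (vc C (rw C \<eta>' AW) w)" by (simp add: natw)
  also have "\<dots> = vc C eW w" by (simp add: RR)
  finally show ?thesis unfolding Cp_def .
qed

lemma L5: "S2 \<Longrightarrow> AA"
proof -
  assume s: S2
  have s': "vc C bW (lw C t' w) = vc C eW (vc C w bV)" using s unfolding S2_def by simp
  have "vc C bW (vc C (lw C t' w) (lw C t' eV)) = vc C eW (vc C w (vc C bV (lw C t' eV)))"
    by (simp add: rest[OF s'])
  also have "\<dots> = vc C eW (vc C w bV)" by (simp add: RR)
  finally show ?thesis unfolding AA_def .
qed

lemma L6: "AA \<Longrightarrow> Cp \<Longrightarrow> S2"
proof -
  assume a: AA and c: Cp
  have c': "vc C eW w = vc C eW (vc C w eV)" using c unfolding Cp_def by simp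
  have "vc C bW (lw C t' w) = vc C bW (lw C t' (vc C eW w))" by (simp add: RR)
  also have "\<dots> = vc C bW (lw C t' (vc C eW (vc C w eV)))" unfolding c' ..
  also have "\<dots> = vc C bW (vc C (lw C t' w) (lw C t' eV))" by (simp add: RR)
  also have "\<dots> = vc C eW (vc C w bV)" using a unfolding AA_def by simp
  finally show ?thesis unfolding S2_def .
qed

lemma L8: "Cpp \<longleftrightarrow> Cc \<and> Cp"
proof
  assume c: Cpp
  have 1: "vc C w eV = vc C eW w" using c unfolding Cpp_def by simp
  have "vc C eW (vc C w eV) = vc C w eV" unfolding 1 by (simp add: RR)
  moreover have "vc C eW (vc C w eV) = vc C eW w" unfolding 1 by (simp add: RR)
  ultimately show "Cc \<and> Cp" unfolding Cc_def Cp_def by simp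
next
  assume "Cc \<and> Cp"
  then show Cpp unfolding Cc_def Cp_def Cpp_def by metis
qed

lemma L7: "S3 \<longleftrightarrow> S1 \<and> S2"
proof
  assume s: S3
  have s': "vc C bW (lw C t' w) = vc C w bV" using s unfolding S3_def .
  have cpp: Cpp
  proof -
    have "vc C eW w = vc C bW (vc C (rw C \<eta>' AW) w)" by (simp add: RR)
    also have "\<dots> = vc C bW (vc C (lw C t' w) (rw C \<eta>' AV))" by (simp add: natw)
    also have "\<dots> = vc C w (vc C bV (rw C \<eta>' AV))" by (simp add: rest[OF s'])
    also have "\<dots> = vc C w eV" by (simp add: RR)
    finally show ?thesis unfolding Cpp_def .
  qed
  have cpp': "vc C eW w = vc C w eV" using cpp unfolding Cpp_def .
  have "vc C bW (vc C (lw C t' w) (lw C t' eV)) = vc C w (vc C bV (lw C t' eV))"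
    by (simp add: rest[OF s'])
  also have "\<dots> = vc C w bV" by (simp add: RR)
  finally have 1: S1 unfolding S1_def by simp
  have "vc C eW (vc C w bV) = vc C w (vc C eV bV)" by (simp add: rest[OF cpp'])
  also have "\<dots> = vc C bW (lw C t' w)" using s' by (simp add: RR)
  finally have 2: S2 unfolding S2_def by simp
  show "S1 \<and> S2" using 1 2 by simp
next
  assume s: "S1 \<and> S2"
  then have cpp: Cpp using L1 L4 L8 by blast
  have cpp': "vc C eW w = vc C w eV" using cpp unfolding Cpp_def .
  have "vc C bW (lw C t' w) = vc C eW (vc C w bV)" using s unfolding S2_def by simp
  also have "\<dots> = vc C w (vc C eV bV)" by (simp add: rest[OF cpp'])
  also have "\<dots> = vc C w bV" by (simp add: RR)
  finally show S3 unfolding S3_def .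
qed

definition "Ealg \<longleftrightarrow> vc C (vc C pW (vc C bW (lw C t' iW))) (lw C t' (vc C pW (vc C w iV))) =
                     vc C (vc C pW (vc C w iV)) (vc C pV (vc C bV (lw C t' iV)))"

lemma L9: "Ealg \<longleftrightarrow> AA"
proof -
  have "Ealg \<longleftrightarrow> vc C pW (vc C bW (vc C (lw C t' w) (lw C t' iV))) = vc C pW (vc C w (vc C bV (lw C t' iV)))"
    unfolding Ealg_def by (simp add: RR)
  also have "\<dots> \<longleftrightarrow> AA"
  proof
    assume e: "vc C pW (vc C bW (vc C (lw C t' w) (lw C t' iV))) = vc C pW (vc C w (vc C bV (lw C t' iV)))"
    have "vc C iW (vc C (vc C pW (vc C bW (vc C (lw C t' w) (lw C t' iV)))) (lw C t' pV)) =
          vc C iW (vc C (vc C pW (vc C w (vc C bV (lw C t' iV)))) (lw C t' pV))" unfolding e ..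
    then show AA unfolding AA_def by (simp add: RR)
  next
    assume a: AA
    have "vc C pW (vc C bW (vc C (lw C t' w) (lw C t' iV))) = vc C pW (vc C bW (vc C (lw C t' w) (vc C (lw C t' eV) (lw C t' iV))))"
      by (simp add: RR)
    also have "\<dots> = vc C pW (vc C eW (vc C w (vc C bV (lw C t' iV))))"
      using a unfolding AA_def by (simp add: rest3[OF a[unfolded AA_def]])
    also have "\<dots> = vc C pW (vc C w (vc C bV (lw C t' iV)))" by (simp add: RR)
    finally show "vc C pW (vc C bW (vc C (lw C t' w) (lw C t' iV))) = vc C pW (vc C w (vc C bV (lw C t' iV)))" .
  qed
  finally show ?thesis .
qed

lemma L10a: "vc C iW (vc C pW (vc C w iV)) = vc C w iV \<longleftrightarrow> Cc"
proof
  assume e: "vc C iW (vc C pW (vc C w iV)) = vc C w iV"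
  have "vc C (vc C iW (vc C pW (vc C w iV))) pV = vc C (vc C w iV) pV" unfolding e ..
  then show Cc unfolding Cc_def by (simp add: RR)
next
  assume c: Cc
  have "vc C iW (vc C pW (vc C w iV)) = vc C eW (vc C w (vc C eV iV))" by (simp add: RR)
  also have "\<dots> = vc C w (vc C eV iV)" by (simp add: rest3[OF c[unfolded Cc_def]])
  also have "\<dots> = vc C w iV" by (simp add: RR)
  finally show "vc C iW (vc C pW (vc C w iV)) = vc C w iV" .
qed

lemma L10b: "vc C pW (vc C w (vc C iV pV)) = vc C pW w \<longleftrightarrow> Cp"
proof
  assume e: "vc C pW (vc C w (vc C iV pV)) = vc C pW w"
  have "vc C iW (vc C pW (vc C w (vc C iV pV))) = vc C iW (vc C pW w)" unfolding e ..
  then show Cp unfolding Cp_def by (simp add: RR)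
next
  assume c: Cp
  have "vc C pW (vc C w (vc C iV pV)) = vc C pW (vc C eW (vc C w eV))" by (simp add: RR)
  also have "\<dots> = vc C pW (vc C eW w)" using c unfolding Cp_def by simp
  also have "\<dots> = vc C pW w" by (simp add: RR)
  finally show "vc C pW (vc C w (vc C iV pV)) = vc C pW w" .
qed

lemma L10c: "vc C iW (vc C pW w) = vc C w (vc C iV pV) \<longleftrightarrow> Cpp"
  unfolding Cpp_def by (simp add: RR)

end

context setting begin

definition hat where "hat W Y = vc C (lw C (cp1 C W v) \<epsilon>) (rw C Y v)"

lemma n1W: "good W \<phi> \<Longrightarrow> vc C (rw C \<phi> v) (lw C (cp1 C t' (cp1 C W v)) \<epsilon>) = vc C (lw C (cp1 C W (cp1 C v (cp1 C f v))) \<epsilon>) (rw C \<phi> (cp1 C v (cp1 C f v)))"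
  using nat[of \<phi> "lw C v \<epsilon>"] by (simp add: good_d)

lemma n2W: "dom1 C W = k \<Longrightarrow> vc C (lw C (cp1 C W v) \<epsilon>) (lw C (cp1 C W (cp1 C v (cp1 C f v))) \<epsilon>) = vc C (lw C (cp1 C W v) \<epsilon>) (rw C (lw C (cp1 C W v) \<epsilon>) (cp1 C f v))"
  using arg_cong[OF eps_assoc, of "lw C (cp1 C W v)"] by simp

lemma recover:
  assumes "dom1 C W = k" "cod1 C W = k'" "dom2 C Y = A" "cod2 C Y = cp1 C W (cp1 C v f)"
    "dom1 C A = k" "cod1 C A = k'"
  shows "vc C (rw C (hat W Y) f) (lw C A \<eta>) = Y"
proof -
  have 1: "vc C (rw C Y (cp1 C v f)) (lw C A \<eta>) = vc C (lw C (cp1 C W (cp1 C v f)) \<eta>) Y"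
    using nat[of Y \<eta>] assms by simp
  have 2: "vc C (rw C (lw C (cp1 C W v) \<epsilon>) f) (lw C (cp1 C W (cp1 C v f)) \<eta>) = id2 C (cp1 C W (cp1 C v f))"
    using arg_cong[OF tri1, of "lw C (cp1 C W v)"] assms by simp
  show ?thesis unfolding hat_def using assms by (simp add: 1 rest[OF 2])
qed

lemma hat_inj:
  assumes "dom1 C W = k" "cod1 C W = k'" "dom2 C Y1 = A" "cod2 C Y1 = cp1 C W (cp1 C v f)"
    "dom2 C Y2 = A" "cod2 C Y2 = cp1 C W (cp1 C v f)" "dom1 C A = k" "cod1 C A = k'"
    and "hat W Y1 = hat W Y2"
  shows "Y1 = Y2"
  using recover[of W Y1 A] recover[of W Y2 A] assms by metis

lemma G1:
  assumes g: "good W \<phi>" and r: "dom2 C \<rho> = A" "cod2 C \<rho> = cp1 C W (cp1 C v f)" "dom1 C A = k" "cod1 C A = k'"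
  shows "hat W (vc C (lw C W \<mu>) (vc C (rw C \<phi> t) (lw C t' \<rho>))) = vc C (beta W \<phi>) (lw C t' (hat W \<rho>))"
  unfolding hat_def beta_def using r g
  by (simp add: good_d rest[OF n2W[symmetric]] rest[OF n1W[OF g, symmetric]])

lemma G2:
  assumes g: "good W \<phi>" and g': "good V \<psi>" and r: "dom2 C \<rho> = V" "cod2 C \<rho> = cp1 C W (cp1 C v f)"
  shows "hat W (vc C (lw C W \<mu>) (vc C (rw C \<rho> t) \<psi>)) = vc C (hat W \<rho>) (beta V \<psi>)"
proof -
  have n: "vc C (rw C \<rho> v) (lw C (cp1 C V v) \<epsilon>) = vc C (lw C (cp1 C W (cp1 C v (cp1 C f v))) \<epsilon>) (rw C \<rho> (cp1 C v (cp1 C f v)))"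
    using nat[of \<rho> "lw C v \<epsilon>"] r g g' by (simp add: good_d)
  show ?thesis unfolding hat_def beta_def using r g g'
    by (simp add: good_d rest[OF n2W[symmetric]] rest[OF n[symmetric]])
qed

lemma G3:
  assumes g: "good W \<phi>" and r: "dom2 C \<rho> = A" "cod2 C \<rho> = cp1 C W (cp1 C v f)" "dom1 C A = k" "cod1 C A = k'"
  shows "hat W (vc C (lw C W \<mu>) (vc C (rw C \<phi> t) (vc C (rw C \<eta>' (cp1 C W t)) \<rho>))) = vc C (eid W \<phi>) (hat W \<rho>)"
proof -
  have n: "vc C (rw C \<eta>' (cp1 C W v)) (lw C (cp1 C W v) \<epsilon>) = vc C (lw C (cp1 C t' (cp1 C W v)) \<epsilon>) (rw C \<eta>' (cp1 C W (cp1 C v (cp1 C f v))))"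
    using nat[of \<eta>' "lw C (cp1 C W v) \<epsilon>"] g by (simp add: good_d)
  show ?thesis unfolding hat_def eid_def beta_def using r g
    by (simp add: good_d rest[OF n2W[symmetric]] rest[OF n1W[OF g, symmetric]] rest[OF n[symmetric]])
qed

lemma G4:
  assumes g: "good W \<phi>" and g': "good V \<psi>" and o: "dom2 C \<omega> = V" "cod2 C \<omega> = W"
    and x: "cod2 C X = cp1 C V (cp1 C v f)" "dom1 C (dom2 C X) = k"
  shows "hat W (vc C (rw C \<omega> t) X) = vc C (rw C \<omega> v) (hat V X)"
proof -
  have n: "vc C (rw C \<omega> v) (lw C (cp1 C V v) \<epsilon>) = vc C (lw C (cp1 C W v) \<epsilon>) (rw C \<omega> (cp1 C v (cp1 C f v)))"
    using nat[of \<omega> "lw C v \<epsilon>"] o g g' by (simp add: good_d)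
  show ?thesis unfolding hat_def using o g g' x
    by (simp add: good_d rest[OF n[symmetric]])
qed

end

context setting begin

lemma em'_obj: "is_alg C l k' t' \<mu>' \<eta>' A \<alpha> \<Longrightarrow> \<exists>!X. hom1 C X l J' \<and> cp1 C v' X = A \<and> lw C v' (rw C \<epsilon>' X) = \<alpha>"
  using em' unfolding em_object_def by blast

lemma em'_mor: "hom1 C X l J' \<Longrightarrow> hom1 C Y l J' \<Longrightarrow>
   alg_mor C t' (cp1 C v' X) (lw C v' (rw C \<epsilon>' X)) (cp1 C v' Y) (lw C v' (rw C \<epsilon>' Y)) \<rho> \<Longrightarrow>
   \<exists>!\<omega>. hom2 C \<omega> X Y \<and> lw C v' \<omega> = \<rho>"
  using em' unfolding em_object_def by blast

lemma Jw1_char: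
  assumes e: "emw1 C t \<mu> t' \<mu>' W \<phi>" and s: "is_splitting C (emw_idem C v \<epsilon> \<eta>' W \<phi>) Wt \<pi> \<iota>"
  shows "hom1 C (Jw1 C v \<epsilon> t' v' \<epsilon>' J J' W \<phi> Wt \<pi> \<iota>) J J' \<and>
     cp1 C v' (Jw1 C v \<epsilon> t' v' \<epsilon>' J J' W \<phi> Wt \<pi> \<iota>) = Wt \<and>
     lw C v' (rw C \<epsilon>' (Jw1 C v \<epsilon> t' v' \<epsilon>' J J' W \<phi> Wt \<pi> \<iota>)) = alpha W \<phi> \<iota> \<pi>"
proof -
  have g: "good W \<phi>" using e by (rule emw1_good)
  have eq: "vc C \<pi> (vc C (lw C (cp1 C W v) \<epsilon>) (vc C (rw C \<phi> v) (lw C t' \<iota>))) = alpha W \<phi> \<iota> \<pi>"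
    unfolding alpha_def beta_def using g split_d[OF g s] by (simp add: good_d)
  have u: "\<exists>!X. hom1 C X J J' \<and> cp1 C v' X = Wt \<and> lw C v' (rw C \<epsilon>' X) = alpha W \<phi> \<iota> \<pi>"
    by (rule em'_obj[OF alg[OF e s]])
  show ?thesis unfolding Jw1_def eq using theI'[OF u] .
qed

lemma vmor:
  assumes "hom1 C X l J'" "hom1 C Y l J'" "hom2 C \<theta> X Y"
  shows "alg_mor C t' (cp1 C v' X) (lw C v' (rw C \<epsilon>' X)) (cp1 C v' Y) (lw C v' (rw C \<epsilon>' Y)) (lw C v' \<theta>)"
proof -
  have h: "dom1 C X = l" "cod1 C X = J'" "dom1 C Y = l" "cod1 C Y = J'" "dom2 C \<theta> = X" "cod2 C \<theta> = Y"
    using assms unfolding hom1_def hom2_def by auto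
  have n: "vc C (rw C \<epsilon>' Y) (lw C (cp1 C f' v') \<theta>) = vc C \<theta> (rw C \<epsilon>' X)"
    using nat[of \<epsilon>' \<theta>] h by simp
  have n': "vc C (lw C v' (rw C \<epsilon>' Y)) (lw C (cp1 C v' (cp1 C f' v')) \<theta>) = vc C (lw C v' \<theta>) (lw C v' (rw C \<epsilon>' X))"
    using arg_cong[OF n, of "lw C v'"] h by simp
  show ?thesis unfolding alg_mor_def hom2_def using h n' by (simp add: t'_eq)
qed

end

locale pair = setting +
  fixes V \<psi> W \<phi> \<omega> Vt \<pi>V \<iota>V Wt \<pi>W \<iota>W
  assumes eV: "emw1 C t \<mu> t' \<mu>' V \<psi>" and eW: "emw1 C t \<mu> t' \<mu>' W \<phi>"
    and om: "hom2 C \<omega> V W"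
    and sV: "is_splitting C (emw_idem C v \<epsilon> \<eta>' V \<psi>) Vt \<pi>V \<iota>V"
    and sW: "is_splitting C (emw_idem C v \<epsilon> \<eta>' W \<phi>) Wt \<pi>W \<iota>W"
begin

lemma gV: "good V \<psi>" using eV by (rule emw1_good)
lemma gW: "good W \<phi>" using eW by (rule emw1_good)

lemma tyP[simp]: "dom1 C V = k" "cod1 C V = k'" "dom2 C \<psi> = cp1 C t' V" "cod2 C \<psi> = cp1 C V (cp1 C v f)"
  "dom1 C W = k" "cod1 C W = k'" "dom2 C \<phi> = cp1 C t' W" "cod2 C \<phi> = cp1 C W (cp1 C v f)"
  "dom2 C \<omega> = V" "cod2 C \<omega> = W"
  using good_d[OF gV] good_d[OF gW] om unfolding hom2_def by auto

lemmas tyS[simp] = split_d(1-4,7,8)[OF gV sV] split_d(1-4,7,8)[OF gW sW]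

sublocale D: dpart C k' t' \<eta>' "cp1 C V v" "cp1 C W v" Vt Wt "beta V \<psi>" "eid V \<psi>" "beta W \<phi>" "eid W \<phi>"
   "rw C \<omega> v" \<iota>V \<pi>V \<iota>W \<pi>W
  apply unfold_locales
  using gV gW apply (simp_all add: eid_beta[OF eV] beta_eid[OF eV] eid_beta[OF eW] beta_eid[OF eW])
  using split_d(5,6)[OF gV sV] split_d(5,6)[OF gW sW] by (simp_all add: eid_def)


abbreviation "rho1 \<equiv> vc C (rw C \<omega> t) (vc C \<psi> (rw C \<eta>' V))"
abbreviation "rho2 \<equiv> vc C \<phi> (vc C (rw C \<eta>' W) \<omega>)"

lemma h_psi: "hat W (vc C (rw C \<omega> t) \<psi>) = vc C (rw C \<omega> v) (beta V \<psi>)"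
proof -
  have "hat W (vc C (rw C \<omega> t) \<psi>) = vc C (rw C \<omega> v) (hat V \<psi>)"
    by (rule G4[OF gW gV]) simp_all
  then show ?thesis unfolding hat_def beta_def .
qed

lemma h_rho1: "hat W rho1 = vc C (rw C \<omega> v) (eid V \<psi>)"
proof -
  have "hat W rho1 = vc C (rw C \<omega> v) (hat V (vc C \<psi> (rw C \<eta>' V)))"
    by (rule G4[OF gW gV]) simp_all
  also have "hat V (vc C \<psi> (rw C \<eta>' V)) = eid V \<psi>" unfolding hat_def eid_def beta_def by simp
  finally show ?thesis .
qed

lemma h_rho2: "hat W rho2 = vc C (eid W \<phi>) (rw C \<omega> v)"
  unfolding hat_def eid_def beta_def by simp

lemma h_phi: "hat W (vc C \<phi> (lw C t' \<omega>)) = vc C (beta W \<phi>) (lw C t' (rw C \<omega> v))"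
  unfolding hat_def beta_def by simp

lemma hinj1: "dom2 C Y1 = cp1 C t' V \<Longrightarrow> dom2 C Y2 = cp1 C t' V \<Longrightarrow>
   cod2 C Y1 = cp1 C W (cp1 C v f) \<Longrightarrow> cod2 C Y2 = cp1 C W (cp1 C v f) \<Longrightarrow>
   (Y1 = Y2) \<longleftrightarrow> (hat W Y1 = hat W Y2)"
proof
  assume a: "hat W Y1 = hat W Y2" and h: "dom2 C Y1 = cp1 C t' V" "dom2 C Y2 = cp1 C t' V"
   "cod2 C Y1 = cp1 C W (cp1 C v f)" "cod2 C Y2 = cp1 C W (cp1 C v f)"
  show "Y1 = Y2" by (rule hat_inj[of W Y1 "cp1 C t' V" Y2]) (simp_all add: a h)
qed simp

lemma hinj2: "dom2 C Y1 = V \<Longrightarrow> dom2 C Y2 = V \<Longrightarrow>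
   cod2 C Y1 = cp1 C W (cp1 C v f) \<Longrightarrow> cod2 C Y2 = cp1 C W (cp1 C v f) \<Longrightarrow>
   (Y1 = Y2) \<longleftrightarrow> (hat W Y1 = hat W Y2)"
proof
  assume a: "hat W Y1 = hat W Y2" and h: "dom2 C Y1 = V" "dom2 C Y2 = V"
   "cod2 C Y1 = cp1 C W (cp1 C v f)" "cod2 C Y2 = cp1 C W (cp1 C v f)"
  show "Y1 = Y2" by (rule hat_inj[of W Y1 V Y2]) (simp_all add: a h)
qed simp

lemma E1i: "(vc C (rw C \<omega> t) \<psi> =
               vc C (lw C W \<mu>) (vc C (rw C \<phi> t) (vc C (lw C t' (rw C \<omega> t))
                 (vc C (lw C t' \<psi>) (lw C t' (rw C \<eta>' V)))))) \<longleftrightarrow> D.S1"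
proof -
  have r: "vc C (lw C W \<mu>) (vc C (rw C \<phi> t) (vc C (lw C t' (rw C \<omega> t))
                 (vc C (lw C t' \<psi>) (lw C t' (rw C \<eta>' V))))) = vc C (lw C W \<mu>) (vc C (rw C \<phi> t) (lw C t' rho1))"
    by simp
  have h: "hat W (vc C (lw C W \<mu>) (vc C (rw C \<phi> t) (lw C t' rho1))) = vc C (beta W \<phi>) (lw C t' (hat W rho1))"
    by (rule G1[OF gW, where A=V]) simp_all
  show ?thesis unfolding r
    apply (subst hinj1)
    apply (unfold h h_psi h_rho1 D.S1_def)
    by simp_all
qed


lemma E2i: "(vc C \<phi> (lw C t' \<omega>) =
               vc C (lw C W \<mu>) (vc C (rw C \<phi> t) (vc C (rw C \<eta>' (cp1 C W t))
                 (vc C (rw C \<omega> t) \<psi>)))) \<longleftrightarrow> D.S2"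
proof -
  have h: "hat W (vc C (lw C W \<mu>) (vc C (rw C \<phi> t) (vc C (rw C \<eta>' (cp1 C W t)) (vc C (rw C \<omega> t) \<psi>))))
     = vc C (eid W \<phi>) (hat W (vc C (rw C \<omega> t) \<psi>))"
    by (rule G3[OF gW, where A="cp1 C t' V"]) simp_all
  show ?thesis
    apply (subst hinj1)
    apply (unfold h h_psi h_phi D.S2_def)
    by simp_all
qed

lemma E3i: "(vc C \<phi> (lw C t' \<omega>) = vc C (rw C \<omega> t) \<psi>) \<longleftrightarrow> D.S3"
  apply (subst hinj1)
  apply (unfold h_psi h_phi D.S3_def)
  by simp_all

lemma E1ii: "emw2 C t \<mu> t' \<eta>' V \<psi> W \<phi> rho1 \<longleftrightarrow> D.S1"
proof -
  have hb: "hat W (vc C (lw C W \<mu>) (vc C (rw C rho1 t) \<psi>)) = vc C (hat W rho1) (beta V \<psi>)"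
    by (rule G2[OF gW gV]) simp_all
  have hb2: "hat W (vc C (lw C W \<mu>) (vc C (rw C \<phi> t) (lw C t' rho1))) = vc C (beta W \<phi>) (lw C t' (hat W rho1))"
    by (rule G1[OF gW, where A=V]) simp_all
  have hc: "hat W (vc C (lw C W \<mu>) (vc C (rw C \<phi> t) (vc C (rw C \<eta>' (cp1 C W t)) rho1))) = vc C (eid W \<phi>) (hat W rho1)"
    by (rule G3[OF gW, where A=V]) simp_all
  have b: "(vc C (lw C W \<mu>) (vc C (rw C rho1 t) \<psi>) = vc C (lw C W \<mu>) (vc C (rw C \<phi> t) (lw C t' rho1)))
     \<longleftrightarrow> D.S1"
    apply (subst hinj1)
    apply (unfold hb hb2 h_rho1 D.S1_def)
    by (simp_all add: D.eb_V)
  have c: "(rho1 = vc C (lw C W \<mu>) (vc C (rw C \<phi> t) (vc C (rw C \<eta>' (cp1 C W t)) rho1))) \<longleftrightarrow> D.Cc"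
    apply (subst hinj2)
    apply (unfold hc h_rho1 D.Cc_def)
    by auto
  have h: "hom2 C rho1 V (cp1 C W t)" unfolding hom2_def by simp
  show ?thesis unfolding emw2_def using h b c D.L1 by blast
qed

lemma E2ii: "emw2 C t \<mu> t' \<eta>' V \<psi> W \<phi> rho2 \<longleftrightarrow> D.S2"
proof -
  have hb: "hat W (vc C (lw C W \<mu>) (vc C (rw C rho2 t) \<psi>)) = vc C (hat W rho2) (beta V \<psi>)"
    by (rule G2[OF gW gV]) simp_all
  have hb2: "hat W (vc C (lw C W \<mu>) (vc C (rw C \<phi> t) (lw C t' rho2))) = vc C (beta W \<phi>) (lw C t' (hat W rho2))"
    by (rule G1[OF gW, where A=V]) simp_all
  have hc: "hat W (vc C (lw C W \<mu>) (vc C (rw C \<phi> t) (vc C (rw C \<eta>' (cp1 C W t)) rho2))) = vc C (eid W \<phi>) (hat W rho2)"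
    by (rule G3[OF gW, where A=V]) simp_all
  have b: "(vc C (lw C W \<mu>) (vc C (rw C rho2 t) \<psi>) = vc C (lw C W \<mu>) (vc C (rw C \<phi> t) (lw C t' rho2)))
     \<longleftrightarrow> D.S2"
    apply (subst hinj1)
    apply (unfold hb hb2 h_rho2 D.S2_def)
    by (auto simp add: rest[OF D.be_W])
  have c: "(rho2 = vc C (lw C W \<mu>) (vc C (rw C \<phi> t) (vc C (rw C \<eta>' (cp1 C W t)) rho2)))"
    apply (subst hinj2)
    apply (unfold hc h_rho2)
    by (simp_all add: rest[OF D.ee_W])
  have h: "hom2 C rho2 V (cp1 C W t)" unfolding hom2_def by simp
  show ?thesis unfolding emw2_def using h b c by blast
qed


abbreviation "JV \<equiv> Jw1 C v \<epsilon> t' v' \<epsilon>' J J' V \<psi> Vt \<pi>V \<iota>V"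
abbreviation "JW \<equiv> Jw1 C v \<epsilon> t' v' \<epsilon>' J J' W \<phi> Wt \<pi>W \<iota>W"
abbreviation "sig \<equiv> vc C \<pi>W (vc C (rw C \<omega> v) \<iota>V)"
abbreviation "algmor \<equiv> alg_mor C t' (cp1 C v' JV) (lw C v' (rw C \<epsilon>' JV)) (cp1 C v' JW) (lw C v' (rw C \<epsilon>' JW)) sig"

lemmas JVc = Jw1_char[OF eV sV]
lemmas JWc = Jw1_char[OF eW sW]

lemma JV1: "hom1 C JV J J'" and JV2: "cp1 C v' JV = Vt" and JV3: "lw C v' (rw C \<epsilon>' JV) = alpha V \<psi> \<iota>V \<pi>V"
  using JVc by auto
lemma JW1: "hom1 C JW J J'" and JW2: "cp1 C v' JW = Wt" and JW3: "lw C v' (rw C \<epsilon>' JW) = alpha W \<phi> \<iota>W \<pi>W"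
  using JWc by auto

lemma algmor_iff: "algmor \<longleftrightarrow> D.AA"
proof -
  have "algmor \<longleftrightarrow> D.Ealg"
    unfolding alg_mor_def JV2 JV3 JW2 JW3 D.Ealg_def alpha_def hom2_def by simp
  then show ?thesis using D.L9 by simp
qed

lemma E1iii: "(algmor \<and> vc C \<iota>W (vc C \<pi>W (vc C (rw C \<omega> v) \<iota>V)) = vc C (rw C \<omega> v) \<iota>V) \<longleftrightarrow> D.S1"
  using algmor_iff D.L10a D.L1 D.L2 D.L3 by blast

lemma E2iii: "(algmor \<and> vc C \<pi>W (vc C (rw C \<omega> v) (vc C \<iota>V \<pi>V)) = vc C \<pi>W (rw C \<omega> v)) \<longleftrightarrow> D.S2"
  using algmor_iff D.L10b D.L4 D.L5 D.L6 by blast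

lemma E3iii: "(algmor \<and> vc C \<iota>W (vc C \<pi>W (rw C \<omega> v)) = vc C (rw C \<omega> v) (vc C \<iota>V \<pi>V)) \<longleftrightarrow> D.S3"
  using algmor_iff D.L10c D.L8 D.L7 D.L1 D.L2 D.L3 D.L4 D.L5 D.L6 by blast

lemma mor_ex: "algmor \<Longrightarrow> \<exists>!\<theta>. hom2 C \<theta> JV JW \<and> lw C v' \<theta> = sig"
  by (rule em'_mor[OF JV1 JW1])

lemma v'th_ty: "hom2 C \<theta> JV JW \<Longrightarrow> dom2 C (lw C v' \<theta>) = Vt \<and> cod2 C (lw C v' \<theta>) = Wt"
  using JV1 JW1 JV2 JW2 unfolding hom2_def hom1_def by auto

lemma th_mor: "hom2 C \<theta> JV JW \<Longrightarrow> lw C v' \<theta> = sig \<Longrightarrow> algmor"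
  using vmor[OF JV1 JW1, of \<theta>] by simp

lemma wil_sig: "weak_iota_lifting C v' JV JW \<iota>V \<iota>W v \<omega> \<theta> \<Longrightarrow> hom2 C \<theta> JV JW \<and> lw C v' \<theta> = sig"
proof -
  assume a: "weak_iota_lifting C v' JV JW \<iota>V \<iota>W v \<omega> \<theta>"
  then have h: "hom2 C \<theta> JV JW" and e: "vc C \<iota>W (lw C v' \<theta>) = vc C (rw C \<omega> v) \<iota>V"
    unfolding weak_iota_lifting_def by auto
  have t: "dom2 C (lw C v' \<theta>) = Vt" "cod2 C (lw C v' \<theta>) = Wt" using v'th_ty[OF h] by auto
  have "lw C v' \<theta> = vc C \<pi>W (vc C \<iota>W (lw C v' \<theta>))" using t by (simp add: rest[OF D.pi_W])
  also have "\<dots> = sig" unfolding e ..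
  finally show ?thesis using h by simp
qed

lemma wpl_sig: "weak_pi_lifting C v' JV JW \<pi>V \<pi>W v \<omega> \<theta> \<Longrightarrow> hom2 C \<theta> JV JW \<and> lw C v' \<theta> = sig"
proof -
  assume a: "weak_pi_lifting C v' JV JW \<pi>V \<pi>W v \<omega> \<theta>"
  then have h: "hom2 C \<theta> JV JW" and e: "vc C (lw C v' \<theta>) \<pi>V = vc C \<pi>W (rw C \<omega> v)"
    unfolding weak_pi_lifting_def by auto
  have t: "dom2 C (lw C v' \<theta>) = Vt" "cod2 C (lw C v' \<theta>) = Wt" using v'th_ty[OF h] by auto
  have "lw C v' \<theta> = vc C (vc C (lw C v' \<theta>) \<pi>V) \<iota>V" using t by (simp add: D.pi_V)
  also have "\<dots> = sig" unfolding e by simp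
  finally show ?thesis using h by simp
qed

lemma E1iv: "(\<exists>\<theta>. weak_iota_lifting C v' JV JW \<iota>V \<iota>W v \<omega> \<theta>) \<longleftrightarrow>
   (algmor \<and> vc C \<iota>W (vc C \<pi>W (vc C (rw C \<omega> v) \<iota>V)) = vc C (rw C \<omega> v) \<iota>V)"
proof
  assume "\<exists>\<theta>. weak_iota_lifting C v' JV JW \<iota>V \<iota>W v \<omega> \<theta>"
  then obtain \<theta> where a: "weak_iota_lifting C v' JV JW \<iota>V \<iota>W v \<omega> \<theta>" by blast
  have s: "hom2 C \<theta> JV JW" "lw C v' \<theta> = sig" using wil_sig[OF a] by auto
  have e: "vc C \<iota>W (lw C v' \<theta>) = vc C (rw C \<omega> v) \<iota>V" using a unfolding weak_iota_lifting_def by auto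
  show "algmor \<and> vc C \<iota>W (vc C \<pi>W (vc C (rw C \<omega> v) \<iota>V)) = vc C (rw C \<omega> v) \<iota>V"
    using th_mor[OF s] e s(2) by simp
next
  assume a: "algmor \<and> vc C \<iota>W (vc C \<pi>W (vc C (rw C \<omega> v) \<iota>V)) = vc C (rw C \<omega> v) \<iota>V"
  then obtain \<theta> where th: "hom2 C \<theta> JV JW" "lw C v' \<theta> = sig" using mor_ex by blast
  then have "weak_iota_lifting C v' JV JW \<iota>V \<iota>W v \<omega> \<theta>"
    unfolding weak_iota_lifting_def using a by simp
  then show "\<exists>\<theta>. weak_iota_lifting C v' JV JW \<iota>V \<iota>W v \<omega> \<theta>" by blast
qed

lemma E2iv: "(\<exists>\<theta>. weak_pi_lifting C v' JV JW \<pi>V \<pi>W v \<omega> \<theta>) \<longleftrightarrow>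
   (algmor \<and> vc C \<pi>W (vc C (rw C \<omega> v) (vc C \<iota>V \<pi>V)) = vc C \<pi>W (rw C \<omega> v))"
proof
  assume "\<exists>\<theta>. weak_pi_lifting C v' JV JW \<pi>V \<pi>W v \<omega> \<theta>"
  then obtain \<theta> where a: "weak_pi_lifting C v' JV JW \<pi>V \<pi>W v \<omega> \<theta>" by blast
  have s: "hom2 C \<theta> JV JW" "lw C v' \<theta> = sig" using wpl_sig[OF a] by auto
  have e: "vc C (lw C v' \<theta>) \<pi>V = vc C \<pi>W (rw C \<omega> v)" using a unfolding weak_pi_lifting_def by auto
  show "algmor \<and> vc C \<pi>W (vc C (rw C \<omega> v) (vc C \<iota>V \<pi>V)) = vc C \<pi>W (rw C \<omega> v)"
    using th_mor[OF s] e s(2) by simp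
next
  assume a: "algmor \<and> vc C \<pi>W (vc C (rw C \<omega> v) (vc C \<iota>V \<pi>V)) = vc C \<pi>W (rw C \<omega> v)"
  then obtain \<theta> where th: "hom2 C \<theta> JV JW" "lw C v' \<theta> = sig" using mor_ex by blast
  then have "weak_pi_lifting C v' JV JW \<pi>V \<pi>W v \<omega> \<theta>"
    unfolding weak_pi_lifting_def using a by simp
  then show "\<exists>\<theta>. weak_pi_lifting C v' JV JW \<pi>V \<pi>W v \<omega> \<theta>" by blast
qed


lemma Jw2_gen:
  assumes m: algmor and f: "vc C \<pi>W (vc C (lw C (cp1 C W v) \<epsilon>) (vc C (rw C \<rho> v) \<iota>V)) = sig"
  shows "hom2 C (Jw2 C v \<epsilon> v' JV JW W \<pi>W \<iota>V \<rho>) JV JW \<and> lw C v' (Jw2 C v \<epsilon> v' JV JW W \<pi>W \<iota>V \<rho>) = sig"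
    "\<And>\<theta>. hom2 C \<theta> JV JW \<and> lw C v' \<theta> = sig \<Longrightarrow> \<theta> = Jw2 C v \<epsilon> v' JV JW W \<pi>W \<iota>V \<rho>"
proof -
  have u: "\<exists>!\<theta>. hom2 C \<theta> JV JW \<and> lw C v' \<theta> = sig" using mor_ex[OF m] .
  have j: "Jw2 C v \<epsilon> v' JV JW W \<pi>W \<iota>V \<rho> = (THE \<theta>. hom2 C \<theta> JV JW \<and> lw C v' \<theta> = sig)"
    unfolding Jw2_def f ..
  show "hom2 C (Jw2 C v \<epsilon> v' JV JW W \<pi>W \<iota>V \<rho>) JV JW \<and> lw C v' (Jw2 C v \<epsilon> v' JV JW W \<pi>W \<iota>V \<rho>) = sig"
    unfolding j by (rule theI'[OF u])
  fix \<theta> assume a: "hom2 C \<theta> JV JW \<and> lw C v' \<theta> = sig"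
  have "(THE \<theta>. hom2 C \<theta> JV JW \<and> lw C v' \<theta> = sig) = \<theta>" using u a by (rule the1_equality)
  then show "\<theta> = Jw2 C v \<epsilon> v' JV JW W \<pi>W \<iota>V \<rho>" unfolding j by simp
qed

lemma f1: "vc C \<pi>W (vc C (lw C (cp1 C W v) \<epsilon>) (vc C (rw C rho1 v) \<iota>V)) = sig"
proof -
  have "vc C \<pi>W (vc C (lw C (cp1 C W v) \<epsilon>) (vc C (rw C rho1 v) \<iota>V)) = vc C \<pi>W (vc C (hat W rho1) \<iota>V)"
    unfolding hat_def by simp
  also have "\<dots> = sig" unfolding h_rho1 by (simp add: D.ei_V)
  finally show ?thesis .
qed

lemma f2: "vc C \<pi>W (vc C (lw C (cp1 C W v) \<epsilon>) (vc C (rw C rho2 v) \<iota>V)) = sig"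
proof -
  have "vc C \<pi>W (vc C (lw C (cp1 C W v) \<epsilon>) (vc C (rw C rho2 v) \<iota>V)) = vc C \<pi>W (vc C (hat W rho2) \<iota>V)"
    unfolding hat_def by simp
  also have "\<dots> = sig" unfolding h_rho2 by (simp add: rest[OF D.pe_W])
  finally show ?thesis .
qed

lemma X1: "D.S1 \<Longrightarrow> lw C v' (Jw2 C v \<epsilon> v' JV JW W \<pi>W \<iota>V rho1) = sig \<and>
   (\<forall>\<theta>. weak_iota_lifting C v' JV JW \<iota>V \<iota>W v \<omega> \<theta> \<longleftrightarrow> \<theta> = Jw2 C v \<epsilon> v' JV JW W \<pi>W \<iota>V rho1)"
proof -
  assume s: D.S1
  have c: "algmor \<and> vc C \<iota>W (vc C \<pi>W (vc C (rw C \<omega> v) \<iota>V)) = vc C (rw C \<omega> v) \<iota>V"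
    using E1iii s by blast
  note J = Jw2_gen[OF conjunct1[OF c] f1]
  show ?thesis
  proof (intro conjI allI iffI)
    show "lw C v' (Jw2 C v \<epsilon> v' JV JW W \<pi>W \<iota>V rho1) = sig" using J(1) by blast
  next
    fix \<theta> assume "weak_iota_lifting C v' JV JW \<iota>V \<iota>W v \<omega> \<theta>"
    then show "\<theta> = Jw2 C v \<epsilon> v' JV JW W \<pi>W \<iota>V rho1" using wil_sig J(2) by blast
  next
    fix \<theta> assume "\<theta> = Jw2 C v \<epsilon> v' JV JW W \<pi>W \<iota>V rho1"
    then show "weak_iota_lifting C v' JV JW \<iota>V \<iota>W v \<omega> \<theta>"
      unfolding weak_iota_lifting_def using J(1) c by simp
  qed
qed

lemma X2: "D.S2 \<Longrightarrow> lw C v' (Jw2 C v \<epsilon> v' JV JW W \<pi>W \<iota>V rho2) = sig \<and>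
   (\<forall>\<theta>. weak_pi_lifting C v' JV JW \<pi>V \<pi>W v \<omega> \<theta> \<longleftrightarrow> \<theta> = Jw2 C v \<epsilon> v' JV JW W \<pi>W \<iota>V rho2)"
proof -
  assume s: D.S2
  have c: "algmor \<and> vc C \<pi>W (vc C (rw C \<omega> v) (vc C \<iota>V \<pi>V)) = vc C \<pi>W (rw C \<omega> v)"
    using E2iii s by blast
  note J = Jw2_gen[OF conjunct1[OF c] f2]
  show ?thesis
  proof (intro conjI allI iffI)
    show "lw C v' (Jw2 C v \<epsilon> v' JV JW W \<pi>W \<iota>V rho2) = sig" using J(1) by blast
  next
    fix \<theta> assume "weak_pi_lifting C v' JV JW \<pi>V \<pi>W v \<omega> \<theta>"
    then show "\<theta> = Jw2 C v \<epsilon> v' JV JW W \<pi>W \<iota>V rho2" using wpl_sig J(2) by blast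
  next
    fix \<theta> assume "\<theta> = Jw2 C v \<epsilon> v' JV JW W \<pi>W \<iota>V rho2"
    then show "weak_pi_lifting C v' JV JW \<pi>V \<pi>W v \<omega> \<theta>"
      unfolding weak_pi_lifting_def using J(1) c by simp
  qed
qed

lemma X3: "D.S3 \<Longrightarrow> rho2 = rho1 \<and>
   (\<forall>\<theta>1 \<theta>2. weak_iota_lifting C v' JV JW \<iota>V \<iota>W v \<omega> \<theta>1 \<and> weak_pi_lifting C v' JV JW \<pi>V \<pi>W v \<omega> \<theta>2 \<longrightarrow> \<theta>1 = \<theta>2)"
proof -
  assume s: D.S3
  have s12: "D.S1 \<and> D.S2" using s D.L7 by simp
  have "D.Cc" "D.Cp" using s12 D.L1 D.L4 by auto
  then have cpp: D.Cpp using D.L8 by simp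
  have r: "rho2 = rho1"
    apply (subst hinj2)
    apply (unfold h_rho1 h_rho2)
    using cpp unfolding D.Cpp_def by simp_all
  have "algmor \<and> vc C \<iota>W (vc C \<pi>W (rw C \<omega> v)) = vc C (rw C \<omega> v) (vc C \<iota>V \<pi>V)"
    using E3iii s by simp
  then have m: algmor by (rule conjunct1)
  show ?thesis
  proof (intro conjI allI impI)
    show "rho2 = rho1" by (rule r)
  next
    fix \<theta>1 \<theta>2 assume "weak_iota_lifting C v' JV JW \<iota>V \<iota>W v \<omega> \<theta>1 \<and> weak_pi_lifting C v' JV JW \<pi>V \<pi>W v \<omega> \<theta>2"
    then have a: "hom2 C \<theta>1 JV JW \<and> lw C v' \<theta>1 = sig" "hom2 C \<theta>2 JV JW \<and> lw C v' \<theta>2 = sig"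
      using wil_sig wpl_sig by auto
    obtain x where "\<forall>y. hom2 C y JV JW \<and> lw C v' y = sig \<longrightarrow> y = x"
      using mor_ex[OF m] by (auto elim: ex1E)
    then show "\<theta>1 = \<theta>2" using a by metis
  qed
qed


lemma main:
 shows "let JV = Jw1 C v \<epsilon> t' v' \<epsilon>' J J' V \<psi> Vt \<pi>V \<iota>V;
        JW = Jw1 C v \<epsilon> t' v' \<epsilon>' J J' W \<phi> Wt \<pi>W \<iota>W;
        JwR = Jw2 C v \<epsilon> v' JV JW W \<pi>W \<iota>V;
        \<rho>1 = vc C (rw C \<omega> t) (vc C \<psi> (rw C \<eta>' V));
        \<rho>2 = vc C \<phi> (vc C (rw C \<eta>' W) \<omega>);
        \<sigma> = vc C \<pi>W (vc C (rw C \<omega> v) \<iota>V);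
        algmor = alg_mor C t' (cp1 C v' JV) (lw C v' (rw C \<epsilon>' JV))
                              (cp1 C v' JW) (lw C v' (rw C \<epsilon>' JW)) \<sigma>;
        wil = weak_iota_lifting C v' JV JW \<iota>V \<iota>W v \<omega>;
        wpl = weak_pi_lifting C v' JV JW \<pi>V \<pi>W v \<omega>;
        c1i = (vc C (rw C \<omega> t) \<psi> =
               vc C (lw C W \<mu>) (vc C (rw C \<phi> t) (vc C (lw C t' (rw C \<omega> t))
                 (vc C (lw C t' \<psi>) (lw C t' (rw C \<eta>' V))))));
        c1ii = emw2 C t \<mu> t' \<eta>' V \<psi> W \<phi> \<rho>1;
        c1iii = (algmor \<and> vc C \<iota>W (vc C \<pi>W (vc C (rw C \<omega> v) \<iota>V)) = vc C (rw C \<omega> v) \<iota>V);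
        c1iv = (\<exists>\<theta>. wil \<theta>);
        c2i = (vc C \<phi> (lw C t' \<omega>) =
               vc C (lw C W \<mu>) (vc C (rw C \<phi> t) (vc C (rw C \<eta>' (cp1 C W t))
                 (vc C (rw C \<omega> t) \<psi>))));
        c2ii = emw2 C t \<mu> t' \<eta>' V \<psi> W \<phi> \<rho>2;
        c2iii = (algmor \<and> vc C \<pi>W (vc C (rw C \<omega> v) (vc C \<iota>V \<pi>V)) = vc C \<pi>W (rw C \<omega> v));
        c2iv = (\<exists>\<theta>. wpl \<theta>);
        c3i = (vc C \<phi> (lw C t' \<omega>) = vc C (rw C \<omega> t) \<psi>);
        c3ii = (c2ii \<and> c1ii);
        c3iii = (algmor \<and> vc C \<iota>W (vc C \<pi>W (rw C \<omega> v)) = vc C (rw C \<omega> v) (vc C \<iota>V \<pi>V));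
        c3iv = ((\<exists>\<theta>. wil \<theta>) \<and> (\<exists>\<theta>. wpl \<theta>))
    in ((c1i \<longleftrightarrow> c1ii) \<and> (c1ii \<longleftrightarrow> c1iii) \<and> (c1iii \<longleftrightarrow> c1iv) \<and>
        (c1i \<longrightarrow> lw C v' (JwR \<rho>1) = \<sigma> \<and> (\<forall>\<theta>. wil \<theta> \<longleftrightarrow> \<theta> = JwR \<rho>1))) \<and>
       ((c2i \<longleftrightarrow> c2ii) \<and> (c2ii \<longleftrightarrow> c2iii) \<and> (c2iii \<longleftrightarrow> c2iv) \<and>
        (c2i \<longrightarrow> lw C v' (JwR \<rho>2) = \<sigma> \<and> (\<forall>\<theta>. wpl \<theta> \<longleftrightarrow> \<theta> = JwR \<rho>2))) \<and>
       ((c3i \<longleftrightarrow> c3ii) \<and> (c3ii \<longleftrightarrow> c3iii) \<and> (c3iii \<longleftrightarrow> c3iv) \<and>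
        (c3i \<longrightarrow> \<rho>2 = \<rho>1 \<and> (\<forall>\<theta>1 \<theta>2. wil \<theta>1 \<and> wpl \<theta>2 \<longrightarrow> \<theta>1 = \<theta>2)))"
proof -
  have e1: "D.S1 \<longleftrightarrow> D.S1" ..
  show ?thesis
    unfolding Let_def E1iv E2iv E1i E2i E3i E1ii E2ii E1iii E2iii E3iii
    using X1 X2 X3 D.L7 by blast
qed

end

theorem proposition4p3:
  fixes C :: "('o,'a,'c) twocat"
  assumes "two_category C" and "admits_EM C" and "idempotents_split C"
    and "is_monad C k t \<mu> \<eta>" and "is_monad C k' t' \<mu>' \<eta>'"
    and "em_object C k t \<mu> \<eta> J f v \<epsilon>" and "em_object C k' t' \<mu>' \<eta>' J' f' v' \<epsilon>'"
    and "emw1 C t \<mu> t' \<mu>' V \<psi>" and "emw1 C t \<mu> t' \<mu>' W \<phi>"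
    and "hom2 C \<omega> V W"
    and "is_splitting C (emw_idem C v \<epsilon> \<eta>' V \<psi>) Vt \<pi>V \<iota>V"
    and "is_splitting C (emw_idem C v \<epsilon> \<eta>' W \<phi>) Wt \<pi>W \<iota>W"
  shows
   "let JV = Jw1 C v \<epsilon> t' v' \<epsilon>' J J' V \<psi> Vt \<pi>V \<iota>V;
        JW = Jw1 C v \<epsilon> t' v' \<epsilon>' J J' W \<phi> Wt \<pi>W \<iota>W;
        JwR = Jw2 C v \<epsilon> v' JV JW W \<pi>W \<iota>V;
        \<rho>1 = vc C (rw C \<omega> t) (vc C \<psi> (rw C \<eta>' V));
        \<rho>2 = vc C \<phi> (vc C (rw C \<eta>' W) \<omega>);
        \<sigma> = vc C \<pi>W (vc C (rw C \<omega> v) \<iota>V);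
        algmor = alg_mor C t' (cp1 C v' JV) (lw C v' (rw C \<epsilon>' JV))
                              (cp1 C v' JW) (lw C v' (rw C \<epsilon>' JW)) \<sigma>;
        wil = weak_iota_lifting C v' JV JW \<iota>V \<iota>W v \<omega>;
        wpl = weak_pi_lifting C v' JV JW \<pi>V \<pi>W v \<omega>;
        c1i = (vc C (rw C \<omega> t) \<psi> =
               vc C (lw C W \<mu>) (vc C (rw C \<phi> t) (vc C (lw C t' (rw C \<omega> t))
                 (vc C (lw C t' \<psi>) (lw C t' (rw C \<eta>' V))))));
        c1ii = emw2 C t \<mu> t' \<eta>' V \<psi> W \<phi> \<rho>1;
        c1iii = (algmor \<and> vc C \<iota>W (vc C \<pi>W (vc C (rw C \<omega> v) \<iota>V)) = vc C (rw C \<omega> v) \<iota>V);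
        c1iv = (\<exists>\<theta>. wil \<theta>);
        c2i = (vc C \<phi> (lw C t' \<omega>) =
               vc C (lw C W \<mu>) (vc C (rw C \<phi> t) (vc C (rw C \<eta>' (cp1 C W t))
                 (vc C (rw C \<omega> t) \<psi>))));
        c2ii = emw2 C t \<mu> t' \<eta>' V \<psi> W \<phi> \<rho>2;
        c2iii = (algmor \<and> vc C \<pi>W (vc C (rw C \<omega> v) (vc C \<iota>V \<pi>V)) = vc C \<pi>W (rw C \<omega> v));
        c2iv = (\<exists>\<theta>. wpl \<theta>);
        c3i = (vc C \<phi> (lw C t' \<omega>) = vc C (rw C \<omega> t) \<psi>);
        c3ii = (c2ii \<and> c1ii);
        c3iii = (algmor \<and> vc C \<iota>W (vc C \<pi>W (rw C \<omega> v)) = vc C (rw C \<omega> v) (vc C \<iota>V \<pi>V));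
        c3iv = ((\<exists>\<theta>. wil \<theta>) \<and> (\<exists>\<theta>. wpl \<theta>))
    in ((c1i \<longleftrightarrow> c1ii) \<and> (c1ii \<longleftrightarrow> c1iii) \<and> (c1iii \<longleftrightarrow> c1iv) \<and>
        (c1i \<longrightarrow> lw C v' (JwR \<rho>1) = \<sigma> \<and> (\<forall>\<theta>. wil \<theta> \<longleftrightarrow> \<theta> = JwR \<rho>1))) \<and>
       ((c2i \<longleftrightarrow> c2ii) \<and> (c2ii \<longleftrightarrow> c2iii) \<and> (c2iii \<longleftrightarrow> c2iv) \<and>
        (c2i \<longrightarrow> lw C v' (JwR \<rho>2) = \<sigma> \<and> (\<forall>\<theta>. wpl \<theta> \<longleftrightarrow> \<theta> = JwR \<rho>2))) \<and>
       ((c3i \<longleftrightarrow> c3ii) \<and> (c3ii \<longleftrightarrow> c3iii) \<and> (c3iii \<longleftrightarrow> c3iv) \<and>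
        (c3i \<longrightarrow> \<rho>2 = \<rho>1 \<and> (\<forall>\<theta>1 \<theta>2. wil \<theta>1 \<and> wpl \<theta>2 \<longrightarrow> \<theta>1 = \<theta>2)))"
proof -
  interpret pair C k t \<mu> \<eta> k' t' \<mu>' \<eta>' J f v \<epsilon> J' f' v' \<epsilon>' V \<psi> W \<phi> \<omega> Vt \<pi>V \<iota>V Wt \<pi>W \<iota>W
    apply unfold_locales
    by (rule assms)+
  show ?thesis by (rule main)
qed

end
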